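(* Let $0<\gamma\le\infty$ and let $\psi:[0,\gamma)\to[0,\infty)$ be a non-zero increasing concave function, continuous on $(0,\gamma)$, with $\psi(0)=0$. If the dual space $M_\psi(0,\gamma)^*$ has order continuous norm, then either condition (A) or condition (B) is satisfied.
   Context: For $f\in L_0(0,\gamma)$ (Lebesgue measure), $f^*$ denotes the decreasing rearrangement of $|f|$: $f^*(t)=\inf\{s\ge0: m(\{|f|>s\})\le t\}$. The Marcinkiewicz space is $M_\psi(0,\gamma)=\{f\in L_0(0,\gamma):\|f\|_{M_\psi}<\infty\}$ with $\|f\|_{M_\psi}=\sup_{0<t<\gamma}\frac{1}{\psi(t)}\int_0^t f^*(s)\,ds$; it is a Banach lattice under the a.e. order. Condition (A): $\gamma=\infty$ and $\liminf_{t\downarrow0}\psi(2t)/\psi(t)>1$ and $\liminf_{t\to\infty}\psi(2t)/\psi(t)>1$. Condition (B): $\gamma<\infty$ and $\liminf_{t\downarrow0}\psi(2t)/\psi(t)>1$. *)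

theory Defs
  imports "HOL-Analysis.Analysis"
begin

definition ivl :: "ereal \<Rightarrow> real set" where
  "ivl \<gamma> = {x. 0 < x \<and> ereal x < \<gamma>}"

definition distr_fn :: "ereal \<Rightarrow> (real \<Rightarrow> real) \<Rightarrow> ennreal \<Rightarrow> ennreal" where
  "distr_fn \<gamma> f s = emeasure lebesgue {x \<in> ivl \<gamma>. s < ennreal \<bar>f x\<bar>}"

text \<open>Decreasing rearrangement f*(t) = inf {s \<ge> 0. m(|f| > s) \<le> t} (value \<infinity> if the set is empty).\<close>
definition rearr :: "ereal \<Rightarrow> (real \<Rightarrow> real) \<Rightarrow> real \<Rightarrow> ennreal" where
  "rearr \<gamma> f t = Inf {s. distr_fn \<gamma> f s \<le> ennreal t}"

definition M_norm :: "ereal \<Rightarrow> (real \<Rightarrow> real) \<Rightarrow> (real \<Rightarrow> real) \<Rightarrow> ennreal" where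
  "M_norm \<gamma> \<psi> f = (SUP t \<in> ivl \<gamma>. (\<integral>\<^sup>+ s \<in> {0<..<t}. rearr \<gamma> f s \<partial>lborel) / ennreal (\<psi> t))"

text \<open>The Marcinkiewicz space M_psi(0,gamma) (as a set of representatives).\<close>
definition M_space :: "ereal \<Rightarrow> (real \<Rightarrow> real) \<Rightarrow> (real \<Rightarrow> real) set" where
  "M_space \<gamma> \<psi> = {f. set_borel_measurable lebesgue (ivl \<gamma>) f \<and> M_norm \<gamma> \<psi> f < \<infinity>}"

definition M_rnorm :: "ereal \<Rightarrow> (real \<Rightarrow> real) \<Rightarrow> (real \<Rightarrow> real) \<Rightarrow> real" where
  "M_rnorm \<gamma> \<psi> f = enn2real (M_norm \<gamma> \<psi> f)"

definition M_dual :: "ereal \<Rightarrow> (real \<Rightarrow> real) \<Rightarrow> ((real \<Rightarrow> real) \<Rightarrow> real) set" where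
  "M_dual \<gamma> \<psi> = {F. (\<forall>f\<in>M_space \<gamma> \<psi>. \<forall>g\<in>M_space \<gamma> \<psi>. F (\<lambda>x. f x + g x) = F f + F g)
      \<and> (\<forall>f\<in>M_space \<gamma> \<psi>. \<forall>c::real. F (\<lambda>x. c * f x) = c * F f)
      \<and> (\<exists>C. \<forall>f\<in>M_space \<gamma> \<psi>. \<bar>F f\<bar> \<le> C * M_rnorm \<gamma> \<psi> f)}"

definition dual_norm :: "ereal \<Rightarrow> (real \<Rightarrow> real) \<Rightarrow> ((real \<Rightarrow> real) \<Rightarrow> real) \<Rightarrow> real" where
  "dual_norm \<gamma> \<psi> F = Sup {\<bar>F f\<bar> | f. f \<in> M_space \<gamma> \<psi> \<and> M_rnorm \<gamma> \<psi> f \<le> 1}"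

definition dual_le :: "ereal \<Rightarrow> (real \<Rightarrow> real) \<Rightarrow> ((real \<Rightarrow> real) \<Rightarrow> real) \<Rightarrow> ((real \<Rightarrow> real) \<Rightarrow> real) \<Rightarrow> bool" where
  "dual_le \<gamma> \<psi> F G \<longleftrightarrow> (\<forall>f\<in>M_space \<gamma> \<psi>.
      (AE x in lebesgue. x \<in> ivl \<gamma> \<longrightarrow> 0 \<le> f x) \<longrightarrow> F f \<le> G f)"

text \<open>Order continuous norm of the dual: for every downward directed set D with
  infimum 0 in the dual lattice, inf of the norms over D is 0 (i.e. x_alpha \<down> 0 implies
  norm x_alpha \<rightarrow> 0).\<close>
definition dual_order_continuous :: "ereal \<Rightarrow> (real \<Rightarrow> real) \<Rightarrow> bool" where
  "dual_order_continuous \<gamma> \<psi> \<longleftrightarrow>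
     (\<forall>D. D \<subseteq> M_dual \<gamma> \<psi> \<and> D \<noteq> {}
        \<and> (\<forall>F\<in>D. \<forall>G\<in>D. \<exists>H\<in>D. dual_le \<gamma> \<psi> H F \<and> dual_le \<gamma> \<psi> H G)
        \<and> (\<forall>F\<in>D. dual_le \<gamma> \<psi> (\<lambda>f. 0) F)
        \<and> (\<forall>H\<in>M_dual \<gamma> \<psi>. (\<forall>F\<in>D. dual_le \<gamma> \<psi> H F) \<longrightarrow> dual_le \<gamma> \<psi> H (\<lambda>f. 0))
      \<longrightarrow> (INF F\<in>D. dual_norm \<gamma> \<psi> F) = 0)"

definition condA :: "ereal \<Rightarrow> (real \<Rightarrow> real) \<Rightarrow> bool" where
  "condA \<gamma> \<psi> \<longleftrightarrow> \<gamma> = \<infinity>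
     \<and> Liminf (at_right 0) (\<lambda>t. ereal (\<psi> (2*t) / \<psi> t)) > 1
     \<and> Liminf at_top (\<lambda>t. ereal (\<psi> (2*t) / \<psi> t)) > 1"

definition condB :: "ereal \<Rightarrow> (real \<Rightarrow> real) \<Rightarrow> bool" where
  "condB \<gamma> \<psi> \<longleftrightarrow> \<gamma> < \<infinity>
     \<and> Liminf (at_right 0) (\<lambda>t. ereal (\<psi> (2*t) / \<psi> t)) > 1"

end

theory Submission
  imports Defs
begin


definition ultra :: "'a filter \<Rightarrow> bool" where
  "ultra U \<longleftrightarrow> U \<noteq> bot \<and> (\<forall>P. eventually P U \<or> eventually (\<lambda>x. \<not> P x) U)"

lemma ex_ultra_below:
  fixes F :: "'a filter"
  assumes F: "F \<noteq> bot"
  shows "\<exists>U\<le>F. ultra U"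
proof -
  let ?X = "{G. G \<noteq> bot \<and> G \<le> F}"
  let ?R = "{(b, a). a \<noteq> bot \<and> a \<le> b \<and> b \<le> F}"
  have bot_notin_R: "c \<in> Chains ?R \<Longrightarrow> bot \<notin> c" for c
    by (auto simp: Chains_def)
  have [simp]: "Field ?R = ?X"
    by (auto simp: Field_def bot_unique)
  have "\<exists>m\<in>Field ?R. \<forall>a\<in>Field ?R. (m, a) \<in> ?R \<longrightarrow> a = m" (is "\<exists>m\<in>?A. ?B m")
  proof (rule Zorns_po_lemma)
    show "Partial_order ?R"
      by (auto simp: partial_order_on_def preorder_on_def
          antisym_def refl_on_def trans_def Field_def bot_unique)
    show "\<exists>u\<in>Field ?R. \<forall>a\<in>C. (a, u) \<in> ?R" if C: "C \<in> Chains ?R" for C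
    proof (simp, intro exI conjI ballI)
      have Inf_C: "Inf C \<noteq> bot" "Inf C \<le> F" if "C \<noteq> {}"
      proof -
        from C that have "Inf C = bot \<longleftrightarrow> (\<exists>x\<in>C. x = bot)"
          unfolding trivial_limit_def by (intro eventually_Inf_base) (auto simp: Chains_def)
        with C show "Inf C \<noteq> bot"
          by (simp add: bot_notin_R)
        from that obtain x where "x \<in> C" by auto
        with C show "Inf C \<le> F"
          by (auto intro!: Inf_lower2[of x] simp: Chains_def)
      qed
      then have [simp]: "inf F (Inf C) = (if C = {} then F else Inf C)"
        using C by (auto simp add: inf_absorb2)
      from C show "inf F (Inf C) \<noteq> bot"
        by (simp add: F Inf_C)
      from C show "inf F (Inf C) \<le> F"
        by (simp add: Chains_def Inf_C F)
      with C show "inf F (Inf C) \<le> x" "x \<le> F" if "x \<in> C" for x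
        using that  by (auto intro: Inf_lower simp: Chains_def)
    qed
  qed
  then obtain U where U: "U \<in> ?A" "?B U" ..
  have "ultra U" unfolding ultra_def
  proof (intro conjI allI)
    show "U \<noteq> bot" using U by auto
    fix P
    show "eventually P U \<or> (\<forall>\<^sub>Fx in U. \<not> P x)"
    proof (rule disjCI)
      assume "\<not> (\<forall>\<^sub>Fx in U. \<not> P x)"
      then have ne: "inf U (principal {x. P x}) \<noteq> bot"
        by (simp add: trivial_limit_def eventually_inf_principal not_eventually)
      have "inf U (principal {x. P x}) \<le> F" using U by (auto intro: le_infI1)
      then have "inf U (principal {x. P x}) \<in> Field ?R" using ne by simp
      moreover have "(U, inf U (principal {x. P x})) \<in> ?R" using U ne by auto
      ultimately have eq: "inf U (principal {x. P x}) = U" by (rule U(2)[rule_format])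
      have "eventually P (inf U (principal {x. P x}))"
        by (simp add: eventually_inf_principal)
      then show "eventually P U" by (simp only: eq)
    qed
  qed
  then show ?thesis using U by auto
qed

lemma ultra_conv:
  fixes x :: "nat \<Rightarrow> real"
  assumes U: "ultra U" and B: "\<And>k. \<bar>x k\<bar> \<le> B"
  shows "\<exists>l. (x \<longlongrightarrow> l) U"
proof -
  have cpt: "compact {-B..B}" by simp
  have ev: "eventually (\<lambda>y. y \<in> {-B..B}) (filtermap x U)"
  proof -
    have "x k \<in> {-B..B}" for k using B[of k] by (simp add: abs_le_iff)
    then show ?thesis by (auto simp: eventually_filtermap intro!: always_eventually)
  qed
  have nb: "filtermap x U \<noteq> bot" using U by (simp add: ultra_def filtermap_bot_iff)
  obtain l where l: "l \<in> {-B..B}" "inf (nhds l) (filtermap x U) \<noteq> bot"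
    using cpt[unfolded compact_filter, rule_format, OF nb ev] by blast
  have "(x \<longlongrightarrow> l) U"
    unfolding tendsto_def
  proof (intro allI impI)
    fix S :: "real set" assume S: "open S" "l \<in> S"
    show "eventually (\<lambda>n. x n \<in> S) U"
    proof (rule ccontr)
      assume "\<not> eventually (\<lambda>n. x n \<in> S) U"
      then have "eventually (\<lambda>n. x n \<notin> S) U" using U unfolding ultra_def by auto
      then have e1: "eventually (\<lambda>y. y \<notin> S) (filtermap x U)" by (simp add: eventually_filtermap)
      have e2: "eventually (\<lambda>y. y \<in> S) (nhds l)" using S by (rule eventually_nhds_in_open)
      have "\<forall>y. y \<in> S \<and> y \<notin> S \<longrightarrow> False" by blast
      then have "eventually (\<lambda>y. False) (inf (nhds l) (filtermap x U))"
        unfolding eventually_inf using e1 e2 by blast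
      then show False using l(2) by (simp add: trivial_limit_def)
    qed
  qed
  then show ?thesis ..
qed



lemma sigma_finite_lebesgue: "sigma_finite_measure (lebesgue :: real measure)"
proof
  show "\<exists>A::real set set. countable A \<and> A \<subseteq> sets lebesgue \<and> \<Union>A = space lebesgue \<and> (\<forall>a\<in>A. emeasure lebesgue a \<noteq> \<infinity>)"
  proof (intro exI[of _ "range (\<lambda>n::nat. {- real n <..< real n})"] conjI)
    show "\<Union> (range (\<lambda>n::nat. {- real n<..<real n})) = space lebesgue"
    proof (auto)
      fix x :: real
      obtain n :: nat where "\<bar>x\<bar> < real n" using reals_Archimedean2 by blast
      then show "\<exists>n. - real n < x \<and> x < real n" by (intro exI[of _ n]) arith
    qed
  qed auto
qed

lemma ivl_borel[measurable]: "ivl \<gamma> \<in> sets borel"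
proof -
  have "{x::real. 0 < x \<and> ereal x < \<gamma>} \<in> sets borel" by measurable
  then show ?thesis by (simp add: ivl_def)
qed

lemma ivl_lebesgue[measurable]: "ivl \<gamma> \<in> sets lebesgue"
  using ivl_borel by simp

lemma downclosed_borel:
  fixes D :: "real set"
  assumes dc: "\<And>x z. z \<in> D \<Longrightarrow> x \<le> z \<Longrightarrow> x \<in> D"
  shows "D \<in> sets borel"
proof (cases "D = UNIV \<or> D = {}")
  case True then show ?thesis by auto
next
  case False
  then obtain b where b: "b \<notin> D" and ne: "D \<noteq> {}" by auto
  have ub: "z < b" if "z \<in> D" for z using dc[of z b] that b by force
  then have bdd: "bdd_above D" by (meson bdd_above.I less_imp_le)
  show ?thesis
  proof (cases "Sup D \<in> D")
    case True
    have eqD: "D = {..Sup D}"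
      using True dc cSup_upper[OF _ bdd] by auto
    have h: "{..Sup D} \<in> sets borel" by simp
    from h show ?thesis by (simp only: eqD[symmetric])
  next
    case False
    have "D = {..<Sup D}"
    proof (auto)
      fix x assume "x \<in> D"
      then show "x < Sup D" using cSup_upper[OF _ bdd] False by (metis order_le_less)
    next
      fix x assume "x < Sup D"
      then obtain z where "z \<in> D" "x < z" using less_cSup_iff[OF ne bdd] by auto
      then show "x \<in> D" using dc by auto
    qed
    have h: "{..<Sup D} \<in> sets borel" by simp
    from h show ?thesis by (simp only: \<open>D = {..<Sup D}\<close>[symmetric])
  qed
qed

lemma antimono_borel:
  fixes F :: "real \<Rightarrow> ennreal"
  assumes "\<And>x y. x \<le> y \<Longrightarrow> F y \<le> F x"
  shows "F \<in> borel_measurable borel"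
proof (rule borel_measurableI_greater)
  fix y
  have "{x. y < F x} \<in> sets borel"
    by (rule downclosed_borel) (use assms in \<open>auto intro: less_le_trans\<close>)
  then show "{x \<in> space borel. y < F x} \<in> sets borel" by simp
qed

lemma emeasure_lborel_Ioi_top: "emeasure lborel {0::real<..} = top"
proof (rule ccontr)
  assume "emeasure lborel {0::real<..} \<noteq> top"
  then obtain r where r: "emeasure lborel {0::real<..} = ennreal r" "0 \<le> r"
    by (cases "emeasure lborel {0::real<..}") auto
  have "emeasure lborel {0::real<..<r+1} \<le> emeasure lborel {0::real<..}"
    by (rule emeasure_mono) auto
  then have "ennreal (r+1) \<le> ennreal r" using r by simp
  then show False using r by (simp add: ennreal_le_iff)
qed

lemma layer_cake:
  fixes g :: "'a \<Rightarrow> ennreal"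
  assumes sf: "sigma_finite_measure M" and g[measurable]: "g \<in> borel_measurable M"
  shows "(\<integral>\<^sup>+ x. g x \<partial>M) = (\<integral>\<^sup>+ s. indicator {0<..} s * emeasure M {x\<in>space M. ennreal s < g x} \<partial>lborel)"
proof -
  have eq: "g x = (\<integral>\<^sup>+ s. indicator {s. 0 < s \<and> ennreal s < g x} s \<partial>lborel)" for x
  proof (cases "g x = top")
    case True
    then have "{s. 0 < s \<and> ennreal s < g x} = {0<..}" by auto
    then show ?thesis using True by (simp add: emeasure_lborel_Ioi_top)
  next
    case False
    then obtain r where r: "g x = ennreal r" "0 \<le> r" by (cases "g x") auto
    then have "{s. 0 < s \<and> ennreal s < g x} = {0<..<r}"
      by (auto simp: ennreal_less_iff)
    then show ?thesis using r by simp
  qed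
  interpret sigma_finite_measure M by (rule sf)
  interpret pair_sigma_finite M lborel ..
  have m: "(\<lambda>(x, s). indicator {s. 0 < s \<and> ennreal s < g x} s :: ennreal) \<in> borel_measurable (M \<Otimes>\<^sub>M lborel)"
  proof -
    have "Measurable.pred (M \<Otimes>\<^sub>M lborel) (\<lambda>(x, s). 0 < s \<and> ennreal s < g x)" by measurable
    then show ?thesis
      by (simp add: indicator_def split_beta' )
  qed
  have "(\<integral>\<^sup>+ x. g x \<partial>M) = (\<integral>\<^sup>+ x. (\<integral>\<^sup>+ s. indicator {s. 0 < s \<and> ennreal s < g x} s \<partial>lborel) \<partial>M)"
    by (subst eq) simp
  also have "\<dots> = (\<integral>\<^sup>+ s. (\<integral>\<^sup>+ x. indicator {s. 0 < s \<and> ennreal s < g x} s \<partial>M) \<partial>lborel)"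
    using Fubini'[of "\<lambda>x s. indicator {s. 0 < s \<and> ennreal s < g x} s"] m by simp
  also have "\<dots> = (\<integral>\<^sup>+ s. indicator {0<..} s * emeasure M {x\<in>space M. ennreal s < g x} \<partial>lborel)"
  proof (rule nn_integral_cong)
    fix s :: real
    have "(\<integral>\<^sup>+ x. indicator {s. 0 < s \<and> ennreal s < g x} s \<partial>M) = (\<integral>\<^sup>+ x. indicator {0<..} s * indicator {x\<in>space M. ennreal s < g x} x \<partial>M)"
      by (rule nn_integral_cong) (auto simp: indicator_def)
    also have "\<dots> = indicator {0<..} s * emeasure M {x\<in>space M. ennreal s < g x}"
      by (rule nn_integral_cmult_indicator) measurable
    finally show "(\<integral>\<^sup>+ x. indicator {s. 0 < s \<and> ennreal s < g x} s \<partial>M) = indicator {0<..} s * emeasure M {x\<in>space M. ennreal s < g x}" .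
  qed
  finally show ?thesis .
qed



definition Fm :: "ereal \<Rightarrow> (real \<Rightarrow> real) \<Rightarrow> real \<Rightarrow> real" where
  "Fm \<gamma> f x = indicator (ivl \<gamma>) x * f x"

lemma Fm_meas[measurable]: "set_borel_measurable lebesgue (ivl \<gamma>) f \<Longrightarrow> Fm \<gamma> f \<in> borel_measurable lebesgue"
  unfolding Fm_def set_borel_measurable_def by simp

lemma distr_set_eq: "{x \<in> ivl \<gamma>. s < ennreal \<bar>f x\<bar>} = {x \<in> space lebesgue. s < ennreal \<bar>Fm \<gamma> f x\<bar>}"
  by (auto simp: Fm_def indicator_def)

lemma distr_set_meas:
  assumes "set_borel_measurable lebesgue (ivl \<gamma>) f"
  shows "{x \<in> ivl \<gamma>. s < ennreal \<bar>f x\<bar>} \<in> sets lebesgue"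
  unfolding distr_set_eq using assms by measurable

lemma distr_antimono:
  assumes "set_borel_measurable lebesgue (ivl \<gamma>) f" "s \<le> s'"
  shows "distr_fn \<gamma> f s' \<le> distr_fn \<gamma> f s"
  unfolding distr_fn_def
  by (rule emeasure_mono) (use assms distr_set_meas in \<open>auto intro: le_less_trans\<close>)

lemma distr_rcont:
  assumes meas: "set_borel_measurable lebesgue (ivl \<gamma>) f"
    and c: "\<And>s'. s < s' \<Longrightarrow> distr_fn \<gamma> f s' \<le> c"
  shows "distr_fn \<gamma> f s \<le> c"
proof (cases "s = top")
  case True
  then have eq: "{x \<in> ivl \<gamma>. s < ennreal \<bar>f x\<bar>} = {}" by auto
  have "distr_fn \<gamma> f s = 0" unfolding distr_fn_def by (simp only: eq) simp
  then show ?thesis by simp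
next
  case False
  then obtain r where r: "s = ennreal r" "0 \<le> r" by (cases s) auto
  define A where "A n = {x \<in> ivl \<gamma>. ennreal (r + 1 / Suc n) < ennreal \<bar>f x\<bar>}" for n :: nat
  have Am: "range A \<subseteq> sets lebesgue" using distr_set_meas[OF meas] by (auto simp: A_def)
  have inc: "incseq A"
  proof (rule incseq_SucI)
    fix n
    have "r + 1 / Suc (Suc n) \<le> r + 1 / Suc n" by (simp add: frac_le)
    then have "ennreal (r + 1 / Suc (Suc n)) \<le> ennreal (r + 1 / Suc n)" by (rule ennreal_leI)
    then show "A n \<subseteq> A (Suc n)" unfolding A_def
      by (auto simp del: ennreal_plus of_nat_Suc intro: le_less_trans)
  qed
  have U: "{x \<in> ivl \<gamma>. s < ennreal \<bar>f x\<bar>} = (\<Union>n. A n)"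
  proof (rule set_eqI)
    fix x
    show "x \<in> {x \<in> ivl \<gamma>. s < ennreal \<bar>f x\<bar>} \<longleftrightarrow> x \<in> (\<Union>n. A n)"
    proof
      assume x: "x \<in> {x \<in> ivl \<gamma>. s < ennreal \<bar>f x\<bar>}"
      then have "r < \<bar>f x\<bar>" by (simp add: ennreal_less_iff r)
      then obtain n where n: "1 / Suc n < \<bar>f x\<bar> - r"
        by (metis diff_gt_0_iff_gt nat_approx_posE)
      have "r + 1 / Suc n < \<bar>f x\<bar>" using n by simp
      then have "ennreal (r + 1 / Suc n) < ennreal \<bar>f x\<bar>"
        using r by (subst ennreal_less_iff) auto
      then have "x \<in> A n" using x by (simp only: A_def mem_Collect_eq)
      then show "x \<in> (\<Union>n. A n)" by blast
    next
      assume "x \<in> (\<Union>n. A n)"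
      then obtain n where "x \<in> A n" by blast
      then have x: "x \<in> ivl \<gamma>" "ennreal (r + 1 / Suc n) < ennreal \<bar>f x\<bar>"
        by (simp_all only: A_def mem_Collect_eq)
      have "ennreal r \<le> ennreal (r + 1 / Suc n)" by (rule ennreal_leI) simp
      then have "s < ennreal \<bar>f x\<bar>" using x(2) r(1) by (simp only:)
      then show "x \<in> {x \<in> ivl \<gamma>. s < ennreal \<bar>f x\<bar>}" using x(1) by simp
    qed
  qed
  have "distr_fn \<gamma> f s = (SUP n. emeasure lebesgue (A n))"
    unfolding distr_fn_def U by (rule SUP_emeasure_incseq[OF Am inc, symmetric])
  also have "\<dots> \<le> c"
  proof (rule SUP_least)
    fix n
    have "s < ennreal (r + 1 / Suc n)" using r by (simp add: ennreal_less_iff)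
    then have "distr_fn \<gamma> f (ennreal (r + 1 / Suc n)) \<le> c" by (rule c)
    then show "emeasure lebesgue (A n) \<le> c" by (simp add: distr_fn_def A_def)
  qed
  finally show ?thesis .
qed

lemma rearr_le: "distr_fn \<gamma> f s \<le> ennreal u \<Longrightarrow> rearr \<gamma> f u \<le> s"
  unfolding rearr_def by (rule Inf_lower) simp

lemma rearr_ge:
  assumes meas: "set_borel_measurable lebesgue (ivl \<gamma>) f" and le: "rearr \<gamma> f u \<le> s"
  shows "distr_fn \<gamma> f s \<le> ennreal u"
proof (rule distr_rcont[OF meas])
  fix s' assume "s < s'"
  with le have "Inf {s. distr_fn \<gamma> f s \<le> ennreal u} < s'" by (simp add: rearr_def)
  then obtain s'' where "distr_fn \<gamma> f s'' \<le> ennreal u" "s'' < s'"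
    by (auto simp: Inf_less_iff)
  then show "distr_fn \<gamma> f s' \<le> ennreal u"
    using distr_antimono[OF meas, of s'' s'] by (meson dual_order.trans less_imp_le)
qed

lemma rearr_less_iff:
  assumes meas: "set_borel_measurable lebesgue (ivl \<gamma>) f"
  shows "s < rearr \<gamma> f u \<longleftrightarrow> ennreal u < distr_fn \<gamma> f s"
  using rearr_le[of \<gamma> f s u] rearr_ge[OF meas, of u s] by (meson not_le)

lemma rearr_antimono: "u \<le> u' \<Longrightarrow> rearr \<gamma> f u' \<le> rearr \<gamma> f u"
  unfolding rearr_def by (rule Inf_superset_mono) (auto intro: order_trans ennreal_leI)

lemma rearr_meas[measurable]: "rearr \<gamma> f \<in> borel_measurable borel"
  by (rule antimono_borel) (rule rearr_antimono)

lemma emeasure_Ioo_less: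
  assumes "0 \<le> t"
  shows "emeasure lborel {u::real. 0 < u \<and> u < t \<and> ennreal u < L} = min (ennreal t) L"
proof (cases "L = top")
  case True
  then have "{u::real. 0 < u \<and> u < t \<and> ennreal u < L} = {0<..<t}" by auto
  then show ?thesis using True assms by simp
next
  case False
  then obtain l where l: "L = ennreal l" "0 \<le> l" by (cases L) auto
  then have "{u::real. 0 < u \<and> u < t \<and> ennreal u < L} = {0<..<min t l}"
    by (auto simp: ennreal_less_iff)
  then show ?thesis using l assms by (simp add: min_ennreal)
qed

lemma rearr_int:
  assumes meas: "set_borel_measurable lebesgue (ivl \<gamma>) f" and t: "0 \<le> t"
  shows "(\<integral>\<^sup>+ u\<in>{0<..<t}. rearr \<gamma> f u \<partial>lborel)
       = (\<integral>\<^sup>+ s. indicator {0<..} s * min (ennreal t) (distr_fn \<gamma> f (ennreal s)) \<partial>lborel)"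
proof -
  have "(\<integral>\<^sup>+ u\<in>{0<..<t}. rearr \<gamma> f u \<partial>lborel)
     = (\<integral>\<^sup>+ s. indicator {0<..} s * emeasure lborel {u\<in>space lborel. ennreal s < rearr \<gamma> f u * indicator {0<..<t} u} \<partial>lborel)"
    by (rule layer_cake[OF sigma_finite_lborel]) measurable
  also have "\<dots> = (\<integral>\<^sup>+ s. indicator {0<..} s * min (ennreal t) (distr_fn \<gamma> f (ennreal s)) \<partial>lborel)"
  proof (rule nn_integral_cong)
    fix s :: real
    show "indicator {0<..} s * emeasure lborel {u\<in>space lborel. ennreal s < rearr \<gamma> f u * indicator {0<..<t} u}
        = indicator {0<..} s * min (ennreal t) (distr_fn \<gamma> f (ennreal s))"
    proof (cases "0 < s")
      case True
      have "{u\<in>space lborel. ennreal s < rearr \<gamma> f u * indicator {0<..<t} u}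
          = {u. 0 < u \<and> u < t \<and> ennreal u < distr_fn \<gamma> f (ennreal s)}"
        using True by (auto simp: indicator_def rearr_less_iff[OF meas])
      then show ?thesis using t by (simp add: emeasure_Ioo_less)
    qed simp
  qed
  finally show ?thesis .
qed

lemma HL:
  assumes meas: "set_borel_measurable lebesgue (ivl \<gamma>) f"
    and B: "B \<in> sets lebesgue" "B \<subseteq> ivl \<gamma>" "emeasure lebesgue B \<le> ennreal b" and b: "0 \<le> b"
  shows "(\<integral>\<^sup>+ x\<in>B. ennreal \<bar>f x\<bar> \<partial>lebesgue) \<le> (\<integral>\<^sup>+ u\<in>{0<..<b}. rearr \<gamma> f u \<partial>lborel)"
proof -
  have "(\<integral>\<^sup>+ x\<in>B. ennreal \<bar>f x\<bar> \<partial>lebesgue) = (\<integral>\<^sup>+ x. ennreal \<bar>Fm \<gamma> f x\<bar> * indicator B x \<partial>lebesgue)"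
    by (rule nn_integral_cong) (use B in \<open>auto simp: Fm_def indicator_def\<close>)
  also have "\<dots> = (\<integral>\<^sup>+ s. indicator {0<..} s * emeasure lebesgue {x\<in>space lebesgue. ennreal s < ennreal \<bar>Fm \<gamma> f x\<bar> * indicator B x} \<partial>lborel)"
    by (rule layer_cake[OF sigma_finite_lebesgue]) (use meas B in measurable)
  also have "\<dots> \<le> (\<integral>\<^sup>+ s. indicator {0<..} s * min (ennreal b) (distr_fn \<gamma> f (ennreal s)) \<partial>lborel)"
  proof (rule nn_integral_mono)
    fix s :: real
    show "indicator {0<..} s * emeasure lebesgue {x\<in>space lebesgue. ennreal s < ennreal \<bar>Fm \<gamma> f x\<bar> * indicator B x}
        \<le> indicator {0<..} s * min (ennreal b) (distr_fn \<gamma> f (ennreal s))"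
    proof (cases "0 < s")
      case True
      let ?S = "{x\<in>space lebesgue. ennreal s < ennreal \<bar>Fm \<gamma> f x\<bar> * indicator B x}"
      have S1: "?S \<subseteq> B" using True by (auto simp: indicator_def split: if_splits)
      have S2: "?S \<subseteq> {x \<in> ivl \<gamma>. ennreal s < ennreal \<bar>f x\<bar>}"
        using True B by (auto simp: indicator_def Fm_def split: if_splits)
      have "emeasure lebesgue ?S \<le> emeasure lebesgue B"
        by (rule emeasure_mono[OF S1 B(1)])
      also have "\<dots> \<le> ennreal b" by (rule B(3))
      finally have 1: "emeasure lebesgue ?S \<le> ennreal b" .
      have 2: "emeasure lebesgue ?S \<le> distr_fn \<gamma> f (ennreal s)"
        unfolding distr_fn_def by (rule emeasure_mono[OF S2 distr_set_meas[OF meas]])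
      show ?thesis using 1 2 True by simp
    qed simp
  qed
  also have "\<dots> = (\<integral>\<^sup>+ u\<in>{0<..<b}. rearr \<gamma> f u \<partial>lborel)"
    by (rule rearr_int[OF meas b, symmetric])
  finally show ?thesis .
qed



lemma M_norm_abs: "M_norm \<gamma> \<psi> (\<lambda>x. \<bar>f x\<bar>) = M_norm \<gamma> \<psi> f"
  by (simp add: M_norm_def rearr_def distr_fn_def)

lemma M_rnorm_abs: "M_rnorm \<gamma> \<psi> (\<lambda>x. \<bar>f x\<bar>) = M_rnorm \<gamma> \<psi> f"
  by (simp add: M_rnorm_def M_norm_abs)

lemma M_space_abs:
  assumes "f \<in> M_space \<gamma> \<psi>" shows "(\<lambda>x. \<bar>f x\<bar>) \<in> M_space \<gamma> \<psi>"
proof -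
  have m: "(\<lambda>x. indicator (ivl \<gamma>) x * f x) \<in> borel_measurable lebesgue"
    using assms by (simp add: M_space_def set_borel_measurable_def)
  have "(\<lambda>x. \<bar>indicator (ivl \<gamma>) x * f x\<bar>) \<in> borel_measurable lebesgue"
    using m by measurable
  moreover have "(\<lambda>x. \<bar>indicator (ivl \<gamma>) x * f x\<bar>) = (\<lambda>x. indicator (ivl \<gamma>) x * \<bar>f x\<bar>)"
    by (auto simp: indicator_def)
  ultimately show ?thesis using assms
    by (simp add: M_space_def set_borel_measurable_def M_norm_abs)
qed

lemma M_rnorm_nonneg: "0 \<le> M_rnorm \<gamma> \<psi> f"
  by (simp add: M_rnorm_def)

lemma not_doc:
  fixes Psi :: "nat \<Rightarrow> (real \<Rightarrow> real) \<Rightarrow> real"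
  assumes add: "\<And>j f g. f \<in> M_space \<gamma> \<psi> \<Longrightarrow> g \<in> M_space \<gamma> \<psi> \<Longrightarrow> Psi j (\<lambda>x. f x + g x) = Psi j f + Psi j g"
    and mult: "\<And>j f c. f \<in> M_space \<gamma> \<psi> \<Longrightarrow> Psi j (\<lambda>x. c * f x) = c * Psi j f"
    and pos: "\<And>j f. f \<in> M_space \<gamma> \<psi> \<Longrightarrow> (AE x in lebesgue. x \<in> ivl \<gamma> \<longrightarrow> 0 \<le> f x) \<Longrightarrow> 0 \<le> Psi j f"
    and absle: "\<And>j f. f \<in> M_space \<gamma> \<psi> \<Longrightarrow> \<bar>Psi j f\<bar> \<le> Psi j (\<lambda>x. \<bar>f x\<bar>)"
    and sumle: "\<And>N f. f \<in> M_space \<gamma> \<psi> \<Longrightarrow> (\<Sum>j<N. Psi j (\<lambda>x. \<bar>f x\<bar>)) \<le> C * M_rnorm \<gamma> \<psi> f"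
    and hM: "\<And>j. h j \<in> M_space \<gamma> \<psi>" and hn: "\<And>j. M_rnorm \<gamma> \<psi> (h j) \<le> 1"
    and hpos: "\<And>j x. 0 \<le> h j x" and hc: "\<And>j. c \<le> Psi j (h j)" and c: "0 < c"
  shows "\<not> dual_order_continuous \<gamma> \<psi>"
proof
  assume doc: "dual_order_continuous \<gamma> \<psi>"
  have absM: "\<And>f. f \<in> M_space \<gamma> \<psi> \<Longrightarrow> (\<lambda>x. \<bar>f x\<bar>) \<in> M_space \<gamma> \<psi>" by (rule M_space_abs)
  have Pabs_nn: "0 \<le> Psi j (\<lambda>x. \<bar>f x\<bar>)" if "f \<in> M_space \<gamma> \<psi>" for j f
    using pos[OF absM[OF that]] by simp
  have summ_abs: "summable (\<lambda>j. Psi j (\<lambda>x. \<bar>f x\<bar>))" if "f \<in> M_space \<gamma> \<psi>" for f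
    by (rule summableI_nonneg_bounded[where x="C * M_rnorm \<gamma> \<psi> f"]) (use Pabs_nn sumle that in auto)
  have summ: "summable (\<lambda>j. Psi j f)" if "f \<in> M_space \<gamma> \<psi>" for f
    by (rule summable_comparison_test'[OF summ_abs[OF that]]) (use absle that in auto)
  have tot: "(\<Sum>j. Psi j (\<lambda>x. \<bar>f x\<bar>)) \<le> C * M_rnorm \<gamma> \<psi> f" if "f \<in> M_space \<gamma> \<psi>" for f
    by (rule suminf_le_const[OF summ_abs[OF that]]) (use sumle that in auto)
  define Phi where "Phi n f = (\<Sum>j. Psi (j + n) f)" for n f
  have summ_sh: "summable (\<lambda>j. Psi (j + n) f)" if "f \<in> M_space \<gamma> \<psi>" for n f
    using summable_ignore_initial_segment[OF summ[OF that]] .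
  have Phi_abs: "\<bar>Phi n f\<bar> \<le> C * M_rnorm \<gamma> \<psi> f" if f: "f \<in> M_space \<gamma> \<psi>" for n f
  proof -
    have s1: "summable (\<lambda>j. Psi (j + n) (\<lambda>x. \<bar>f x\<bar>))"
      using summable_ignore_initial_segment[OF summ_abs[OF f]] .
    have "\<bar>Phi n f\<bar> \<le> (\<Sum>j. Psi (j + n) (\<lambda>x. \<bar>f x\<bar>))"
      unfolding Phi_def
      by (rule order_trans[OF summable_rabs]) 
         (auto intro!: suminf_le summable_rabs_comparison_test[OF _ s1] s1 absle f simp: )
    also have "\<dots> \<le> (\<Sum>j. Psi j (\<lambda>x. \<bar>f x\<bar>))"
    proof -
      have "(\<Sum>j. Psi j (\<lambda>x. \<bar>f x\<bar>)) = (\<Sum>j. Psi (j + n) (\<lambda>x. \<bar>f x\<bar>)) + (\<Sum>i<n. Psi i (\<lambda>x. \<bar>f x\<bar>))"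
        by (rule suminf_split_initial_segment[OF summ_abs[OF f]])
      moreover have "0 \<le> (\<Sum>i<n. Psi i (\<lambda>x. \<bar>f x\<bar>))" by (intro sum_nonneg Pabs_nn f)
      ultimately show ?thesis by simp
    qed
    also have "\<dots> \<le> C * M_rnorm \<gamma> \<psi> f" by (rule tot[OF f])
    finally show ?thesis .
  qed
  have Phi_dual: "Phi n \<in> M_dual \<gamma> \<psi>" for n
    unfolding M_dual_def
  proof (intro CollectI conjI ballI allI exI)
    fix f g assume f: "f \<in> M_space \<gamma> \<psi>" and g: "g \<in> M_space \<gamma> \<psi>"
    show "Phi n (\<lambda>x. f x + g x) = Phi n f + Phi n g"
      unfolding Phi_def using add[OF f g] by (simp add: suminf_add[OF summ_sh[OF f] summ_sh[OF g]])
  next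
    fix f and c' :: real assume f: "f \<in> M_space \<gamma> \<psi>"
    show "Phi n (\<lambda>x. c' * f x) = c' * Phi n f"
      unfolding Phi_def using mult[OF f] by (simp add: suminf_mult[OF summ_sh[OF f]])
  next
    fix f assume f: "f \<in> M_space \<gamma> \<psi>"
    show "\<bar>Phi n f\<bar> \<le> C * M_rnorm \<gamma> \<psi> f" by (rule Phi_abs[OF f])
  qed
  have Phi_split: "Phi n f = (\<Sum>i<k. Psi (i + n) f) + Phi (k + n) f" if f: "f \<in> M_space \<gamma> \<psi>" for n k f
  proof -
    have "Phi n f = (\<Sum>j. Psi (j + k + n) f) + (\<Sum>i<k. Psi (i + n) f)"
      unfolding Phi_def by (subst suminf_split_initial_segment[OF summ_sh[OF f], of n k]) (simp add: add.assoc)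
    then show ?thesis unfolding Phi_def by (simp add: ac_simps)
  qed
  have Phi_nn: "0 \<le> Phi n f" if f: "f \<in> M_space \<gamma> \<psi>" and fp: "AE x in lebesgue. x \<in> ivl \<gamma> \<longrightarrow> 0 \<le> f x" for n f
    unfolding Phi_def by (rule suminf_nonneg[OF summ_sh[OF f]]) (rule pos[OF f fp])
  have Phi_mono: "dual_le \<gamma> \<psi> (Phi m) (Phi n)" if "n \<le> m" for n m
    unfolding dual_le_def
  proof (intro ballI impI)
    fix f assume f: "f \<in> M_space \<gamma> \<psi>" and fp: "AE x in lebesgue. x \<in> ivl \<gamma> \<longrightarrow> 0 \<le> f x"
    have "Phi n f = (\<Sum>i<m - n. Psi (i + n) f) + Phi (m - n + n) f" by (rule Phi_split[OF f])
    moreover have "0 \<le> (\<Sum>i<m - n. Psi (i + n) f)" by (intro sum_nonneg pos f fp)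
    ultimately show "Phi m f \<le> Phi n f" using that by simp
  qed
  have Phi_lim: "(\<lambda>n. Phi n f) \<longlonglongrightarrow> 0" if f: "f \<in> M_space \<gamma> \<psi>" for f
  proof (rule LIMSEQ_I)
    fix r :: real assume "0 < r"
    from suminf_exist_split[OF this summ[OF f]] obtain N where "\<forall>n\<ge>N. norm (\<Sum>i. Psi (i + n) f) < r" by blast
    then show "\<exists>N. \<forall>n\<ge>N. norm (Phi n f - 0) < r" unfolding Phi_def by auto
  qed
  let ?D = "range Phi"
  have "(INF F\<in>?D. dual_norm \<gamma> \<psi> F) = 0"
  proof (rule doc[unfolded dual_order_continuous_def, rule_format])
    show "?D \<subseteq> M_dual \<gamma> \<psi> \<and> ?D \<noteq> {} \<and>
      (\<forall>F\<in>?D. \<forall>G\<in>?D. \<exists>H\<in>?D. dual_le \<gamma> \<psi> H F \<and> dual_le \<gamma> \<psi> H G) \<and>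
      (\<forall>F\<in>?D. dual_le \<gamma> \<psi> (\<lambda>f. 0) F) \<and>
      (\<forall>H\<in>M_dual \<gamma> \<psi>. (\<forall>F\<in>?D. dual_le \<gamma> \<psi> H F) \<longrightarrow> dual_le \<gamma> \<psi> H (\<lambda>f. 0))"
    proof (intro conjI ballI impI)
      show "?D \<subseteq> M_dual \<gamma> \<psi>" using Phi_dual by auto
      show "?D \<noteq> {}" by simp
    next
      fix F G assume "F \<in> ?D" "G \<in> ?D"
      then obtain n m where "F = Phi n" "G = Phi m" by auto
      then show "\<exists>H\<in>?D. dual_le \<gamma> \<psi> H F \<and> dual_le \<gamma> \<psi> H G"
        by (intro bexI[of _ "Phi (max n m)"]) (auto intro!: Phi_mono)
    next
      fix F assume "F \<in> ?D"
      then obtain n where "F = Phi n" by auto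
      then show "dual_le \<gamma> \<psi> (\<lambda>f. 0) F" unfolding dual_le_def using Phi_nn by auto
    next
      fix H assume H: "H \<in> M_dual \<gamma> \<psi>" and le: "\<forall>F\<in>?D. dual_le \<gamma> \<psi> H F"
      show "dual_le \<gamma> \<psi> H (\<lambda>f. 0)"
        unfolding dual_le_def
      proof (intro ballI impI)
        fix f assume f: "f \<in> M_space \<gamma> \<psi>" and fp: "AE x in lebesgue. x \<in> ivl \<gamma> \<longrightarrow> 0 \<le> f x"
        have "\<forall>n. H f \<le> Phi n f" using le f fp by (auto simp: dual_le_def)
        then show "H f \<le> 0" using Phi_lim[OF f] by (intro LIMSEQ_le_const) auto
      qed
    qed
  qed
  moreover have "c \<le> (INF F\<in>?D. dual_norm \<gamma> \<psi> F)"
  proof (rule cINF_greatest)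
    show "?D \<noteq> {}" by simp
    fix F assume "F \<in> ?D"
    then obtain n where F: "F = Phi n" by auto
    have Cnn: "0 \<le> C"
    proof -
      have "c \<le> Psi 0 (h 0)" by (rule hc)
      also have "\<dots> \<le> \<bar>Psi 0 (h 0)\<bar>" by simp
      also have "\<dots> \<le> Psi 0 (\<lambda>x. \<bar>h 0 x\<bar>)" by (rule absle[OF hM])
      also have "\<dots> = (\<Sum>j<1. Psi j (\<lambda>x. \<bar>h 0 x\<bar>))" by simp
      also have "\<dots> \<le> C * M_rnorm \<gamma> \<psi> (h 0)" by (rule sumle[OF hM])
      finally have "0 < C * M_rnorm \<gamma> \<psi> (h 0)" using c by simp
      then show ?thesis using M_rnorm_nonneg[of \<gamma> \<psi> "h 0"] by (simp add: zero_less_mult_iff)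
    qed
    have bdd: "bdd_above {\<bar>F f\<bar> | f. f \<in> M_space \<gamma> \<psi> \<and> M_rnorm \<gamma> \<psi> f \<le> 1}"
    proof (rule bdd_aboveI)
      fix y assume "y \<in> {\<bar>F f\<bar> | f. f \<in> M_space \<gamma> \<psi> \<and> M_rnorm \<gamma> \<psi> f \<le> 1}"
      then obtain f where y: "y = \<bar>Phi n f\<bar>" "f \<in> M_space \<gamma> \<psi>" "M_rnorm \<gamma> \<psi> f \<le> 1" using F by auto
      have "y \<le> C * M_rnorm \<gamma> \<psi> f" using y Phi_abs by auto
      also have "\<dots> \<le> C * 1" using y(3) Cnn by (intro mult_left_mono) auto
      finally show "y \<le> C" by simp
    qed
    have "c \<le> Psi n (h n)" by (rule hc)
    also have "\<dots> \<le> Phi n (h n)"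
    proof -
      have "Phi n (h n) = (\<Sum>i<1. Psi (i + n) (h n)) + Phi (1 + n) (h n)" by (rule Phi_split[OF hM])
      moreover have "0 \<le> Phi (1 + n) (h n)" by (rule Phi_nn[OF hM]) (simp add: hpos)
      ultimately show ?thesis by simp
    qed
    also have "\<dots> \<le> \<bar>F (h n)\<bar>" using F by simp
    also have "\<dots> \<le> dual_norm \<gamma> \<psi> F"
      unfolding dual_norm_def by (rule cSup_upper[OF _ bdd]) (use hM hn in auto)
    finally show "c \<le> dual_norm \<gamma> \<psi> F" .
  qed
  ultimately show False using c by simp
qed



lemma min_suminf_ennreal:
  fixes a :: "nat \<Rightarrow> ennreal"
  shows "min t (\<Sum>k. a k) \<le> (\<Sum>k. min t (a k))"
proof (cases "\<exists>k. t \<le> a k")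
  case True
  then obtain k where k: "t \<le> a k" by auto
  have "min t (\<Sum>k. a k) \<le> min t (a k)" using k by simp
  also have "\<dots> = (\<Sum>i\<in>{k}. min t (a i))" by simp
  also have "\<dots> \<le> (\<Sum>k. min t (a k))" by (rule sum_le_suminf) auto
  finally show ?thesis .
next
  case False
  then have "min t (a k) = a k" for k by (intro min.absorb2) (auto simp: not_le intro: less_imp_le)
  then show ?thesis by simp
qed

lemma Lbound:
  fixes v :: "nat \<Rightarrow> real" and e :: "nat \<Rightarrow> ennreal"
  assumes meas: "set_borel_measurable lebesgue (ivl \<gamma>) h"
    and v: "\<And>k. 0 \<le> v k"
    and d: "\<And>s. 0 < s \<Longrightarrow> distr_fn \<gamma> h (ennreal s) \<le> (\<Sum>k. indicator {..<v k} s * e k)"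
    and t: "0 \<le> t"
  shows "(\<integral>\<^sup>+ u\<in>{0<..<t}. rearr \<gamma> h u \<partial>lborel) \<le> (\<Sum>k. ennreal (v k) * min (ennreal t) (e k))"
proof -
  have "(\<integral>\<^sup>+ u\<in>{0<..<t}. rearr \<gamma> h u \<partial>lborel)
       = (\<integral>\<^sup>+ s. indicator {0<..} s * min (ennreal t) (distr_fn \<gamma> h (ennreal s)) \<partial>lborel)"
    by (rule rearr_int[OF meas t])
  also have "\<dots> \<le> (\<integral>\<^sup>+ s. (\<Sum>k. indicator {0<..<v k} s * min (ennreal t) (e k)) \<partial>lborel)"
  proof (rule nn_integral_mono)
    fix s :: real
    show "indicator {0<..} s * min (ennreal t) (distr_fn \<gamma> h (ennreal s))
        \<le> (\<Sum>k. indicator {0<..<v k} s * min (ennreal t) (e k))"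
    proof (cases "0 < s")
      case True
      have "min (ennreal t) (distr_fn \<gamma> h (ennreal s)) \<le> min (ennreal t) (\<Sum>k. indicator {..<v k} s * e k)"
        using d[OF True] by (rule min.mono[OF order_refl])
      also have "\<dots> \<le> (\<Sum>k. min (ennreal t) (indicator {..<v k} s * e k))"
        by (rule min_suminf_ennreal)
      also have "\<dots> = (\<Sum>k. indicator {0<..<v k} s * min (ennreal t) (e k))"
        using True by (intro suminf_cong) (auto simp: indicator_def)
      finally show ?thesis using True by simp
    qed simp
  qed
  also have "\<dots> = (\<Sum>k. (\<integral>\<^sup>+ s. indicator {0<..<v k} s * min (ennreal t) (e k) \<partial>lborel))"
    by (rule nn_integral_suminf) measurable
  also have "\<dots> = (\<Sum>k. ennreal (v k) * min (ennreal t) (e k))"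
  proof (rule suminf_cong)
    fix k
    have "(\<integral>\<^sup>+ s. indicator {0<..<v k} s * min (ennreal t) (e k) \<partial>lborel)
        = (\<integral>\<^sup>+ s. min (ennreal t) (e k) * indicator {0<..<v k} s \<partial>lborel)"
      by (simp add: mult.commute)
    also have "\<dots> = min (ennreal t) (e k) * emeasure lborel {0<..<v k}"
      by (rule nn_integral_cmult_indicator) simp
    also have "\<dots> = ennreal (v k) * min (ennreal t) (e k)" using v[of k] by (simp add: mult.commute)
    finally show "(\<integral>\<^sup>+ s. indicator {0<..<v k} s * min (ennreal t) (e k) \<partial>lborel) = ennreal (v k) * min (ennreal t) (e k)" .
  qed
  finally show ?thesis .
qed

locale psi_ctx =
  fixes \<gamma> :: ereal and \<psi> :: "real \<Rightarrow> real"
  assumes g0: "0 < \<gamma>"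
    and nonneg: "\<forall>t. 0 \<le> t \<and> ereal t < \<gamma> \<longrightarrow> 0 \<le> \<psi> t"
    and nz: "\<exists>t. 0 \<le> t \<and> ereal t < \<gamma> \<and> \<psi> t \<noteq> 0"
    and mono: "mono_on {t. 0 \<le> t \<and> ereal t < \<gamma>} \<psi>"
    and conc: "concave_on {t. 0 \<le> t \<and> ereal t < \<gamma>} \<psi>"
    and psi0: "\<psi> 0 = 0"
begin

abbreviation "Dom \<equiv> {t. 0 \<le> t \<and> ereal t < \<gamma>}"

lemma ereal_le_less: "s \<le> t \<Longrightarrow> ereal t < g \<Longrightarrow> ereal s < g"
  by (metis ereal_less_eq(3) le_less_trans)

lemma in_Dom_le: "t \<in> Dom \<Longrightarrow> 0 \<le> s \<Longrightarrow> s \<le> t \<Longrightarrow> s \<in> Dom"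
  by (auto intro: ereal_le_less)

lemma ivl_Dom: "t \<in> ivl \<gamma> \<longleftrightarrow> t \<in> Dom \<and> 0 < t"
  by (auto simp: ivl_def)

lemma ivl_le: "t \<in> ivl \<gamma> \<Longrightarrow> 0 < s \<Longrightarrow> s \<le> t \<Longrightarrow> s \<in> ivl \<gamma>"
  by (auto simp: ivl_def intro: ereal_le_less)

lemma psi_mono: "s \<in> Dom \<Longrightarrow> t \<in> Dom \<Longrightarrow> s \<le> t \<Longrightarrow> \<psi> s \<le> \<psi> t"
  using mono by (auto simp: mono_on_def)

lemma psi_nn: "t \<in> Dom \<Longrightarrow> 0 \<le> \<psi> t" using nonneg by auto

lemma conc0:
  assumes "t \<in> Dom" "0 \<le> \<theta>" "\<theta> \<le> 1"
  shows "\<theta> * \<psi> t \<le> \<psi> (\<theta> * t)"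
proof -
  have "0 \<in> Dom" using g0 by (simp add: zero_ereal_def)
  from concave_onD[OF conc assms(2,3) this assms(1)]
  show ?thesis using psi0 by simp
qed

lemma ratio:
  assumes "t \<in> Dom" "0 < s" "s \<le> t"
  shows "s / t * \<psi> t \<le> \<psi> s"
  using conc0[OF assms(1), of "s / t"] assms by (simp add: field_simps)

lemma psi_pos:
  assumes "t \<in> ivl \<gamma>" shows "0 < \<psi> t"
proof -
  obtain t0 where t0: "t0 \<in> Dom" "\<psi> t0 \<noteq> 0" using nz by auto
  have p0: "0 < \<psi> t0" using t0 psi_nn by force
  have t0p: "0 < t0" using t0 psi0 by (cases "t0 = 0") auto
  have t: "t \<in> Dom" "0 < t" using assms by (auto simp: ivl_def)
  show ?thesis
  proof (cases "t0 \<le> t")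
    case True then show ?thesis using psi_mono[OF t0(1) t(1)] p0 by simp
  next
    case False
    have "t / t0 * \<psi> t0 \<le> \<psi> t" using ratio[OF t0(1) t(2)] False by simp
    moreover have "0 < t / t0 * \<psi> t0" using t t0p p0 by simp
    ultimately show ?thesis by simp
  qed
qed

lemma psi_K:
  assumes t: "0 < t" and K: "2 \<le> K" and Kt: "K * t \<in> Dom"
  shows "\<psi> (K * t) \<le> \<psi> t + (K - 1) * (\<psi> (2 * t) - \<psi> t)"
proof (cases "K = 2")
  case True then show ?thesis by simp
next
  case False
  then have K2: "2 < K" using K by simp
  define \<theta> where "\<theta> = 1 / (K - 1)"
  have th: "0 \<le> \<theta>" "\<theta> \<le> 1" using K2 by (auto simp: \<theta>_def)
  have tD: "t \<in> Dom" using in_Dom_le[OF Kt] t K by auto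
  have \<theta>K: "\<theta> * (K - 1) = 1" using K2 by (simp add: \<theta>_def)
  have "(1 - \<theta>) * t + \<theta> * (K * t) = t + (\<theta> * (K - 1)) * t" by (simp add: algebra_simps)
  also have "\<dots> = 2 * t" using \<theta>K by simp
  finally have eq: "(1 - \<theta>) * t + \<theta> * (K * t) = 2 * t" .
  from concave_onD[OF conc th tD Kt]
  have "(1 - \<theta>) * \<psi> t + \<theta> * \<psi> (K * t) \<le> \<psi> (2 * t)" using eq by simp
  then have "\<theta> * \<psi> (K * t) \<le> \<psi> (2 * t) - (1 - \<theta>) * \<psi> t" by simp
  then have "(K - 1) * (\<theta> * \<psi> (K * t)) \<le> (K - 1) * (\<psi> (2 * t) - (1 - \<theta>) * \<psi> t)"
    using K2 by (intro mult_left_mono) auto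
  moreover have "(K - 1) * (\<theta> * \<psi> (K * t)) = \<psi> (K * t)" using K2 by (simp add: \<theta>_def)
  moreover have "(K - 1) * (\<psi> (2 * t) - (1 - \<theta>) * \<psi> t) = \<psi> t + (K - 1) * (\<psi> (2 * t) - \<psi> t)"
    using K2 by (simp add: \<theta>_def field_simps)
  ultimately show ?thesis by simp
qed

lemma L_le_norm:
  assumes f: "f \<in> M_space \<gamma> \<psi>" and b: "b \<in> ivl \<gamma>"
  shows "(\<integral>\<^sup>+ u\<in>{0<..<b}. rearr \<gamma> f u \<partial>lborel) \<le> M_norm \<gamma> \<psi> f * ennreal (\<psi> b)"
proof -
  have p: "0 < \<psi> b" by (rule psi_pos[OF b])
  have "(\<integral>\<^sup>+ u\<in>{0<..<b}. rearr \<gamma> f u \<partial>lborel) / ennreal (\<psi> b) \<le> M_norm \<gamma> \<psi> f"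
    unfolding M_norm_def by (rule SUP_upper[OF b])
  then have "(\<integral>\<^sup>+ u\<in>{0<..<b}. rearr \<gamma> f u \<partial>lborel) / ennreal (\<psi> b) * ennreal (\<psi> b) \<le> M_norm \<gamma> \<psi> f * ennreal (\<psi> b)"
    by (rule mult_right_mono) simp
  moreover have "(\<integral>\<^sup>+ u\<in>{0<..<b}. rearr \<gamma> f u \<partial>lborel) / ennreal (\<psi> b) * ennreal (\<psi> b) = (\<integral>\<^sup>+ u\<in>{0<..<b}. rearr \<gamma> f u \<partial>lborel)"
    using p by (simp add: ennreal_divide_times ennreal_times_divide divide_ennreal[symmetric] mult_divide_eq_ennreal)
  ultimately show ?thesis by simp
qed

lemma norm_le1:
  assumes meas: "set_borel_measurable lebesgue (ivl \<gamma>) h"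
    and L: "\<And>t. t \<in> ivl \<gamma> \<Longrightarrow> (\<integral>\<^sup>+ u\<in>{0<..<t}. rearr \<gamma> h u \<partial>lborel) \<le> ennreal (\<psi> t)"
  shows "h \<in> M_space \<gamma> \<psi>" "M_rnorm \<gamma> \<psi> h \<le> 1"
proof -
  have "M_norm \<gamma> \<psi> h \<le> 1"
    unfolding M_norm_def
  proof (rule SUP_least)
    fix t assume t: "t \<in> ivl \<gamma>"
    have p: "0 < \<psi> t" by (rule psi_pos[OF t])
    show "(\<integral>\<^sup>+ u\<in>{0<..<t}. rearr \<gamma> h u \<partial>lborel) / ennreal (\<psi> t) \<le> 1"
      using L[OF t] p by (simp add: divide_le_posI_ennreal)
  qed
  moreover have "(1::ennreal) < \<infinity>" by simp
  ultimately have "M_norm \<gamma> \<psi> h < \<infinity>" by (rule le_less_trans)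
  then show "h \<in> M_space \<gamma> \<psi>" using meas by (auto simp: M_space_def)
  show "M_rnorm \<gamma> \<psi> h \<le> 1" using \<open>M_norm \<gamma> \<psi> h \<le> 1\<close>
    by (simp add: M_rnorm_def enn2real_leI)
qed

end



definition blk :: "real set \<Rightarrow> (real \<Rightarrow> real) \<Rightarrow> real" where
  "blk E f = (\<integral>x. f x * indicator E x \<partial>lebesgue)"

lemma blk_mult: "blk E (\<lambda>x. c * f x) = c * blk E f"
  by (simp add: blk_def mult.assoc)

lemma blk_abs: "\<bar>blk E f\<bar> \<le> blk E (\<lambda>x. \<bar>f x\<bar>)"
proof -
  have "\<bar>blk E f\<bar> \<le> (\<integral>x. \<bar>f x * indicator E x\<bar> \<partial>lebesgue)" unfolding blk_def by (rule integral_abs_bound)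
  also have "\<dots> = blk E (\<lambda>x. \<bar>f x\<bar>)" unfolding blk_def by (simp add: abs_mult)
  finally show ?thesis .
qed

context psi_ctx
begin

lemma sub_ivl: "b \<in> ivl \<gamma> \<Longrightarrow> {0<..<b} \<subseteq> ivl \<gamma>"
  using ivl_le by auto

lemma blk_nn_bound:
  assumes f: "f \<in> M_space \<gamma> \<psi>" and E: "E \<in> sets lebesgue" "E \<subseteq> {0<..<b}" and b: "b \<in> ivl \<gamma>"
  shows "(\<integral>\<^sup>+ x. ennreal \<bar>f x\<bar> * indicator E x \<partial>lebesgue) \<le> (\<integral>\<^sup>+ x. ennreal \<bar>f x\<bar> * indicator {0<..<b} x \<partial>lebesgue)"
  by (rule nn_integral_mono) (use E in \<open>auto simp: indicator_def\<close>)

lemma interval_bound: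
  assumes f: "f \<in> M_space \<gamma> \<psi>" and b: "b \<in> ivl \<gamma>"
  shows "(\<integral>\<^sup>+ x. ennreal \<bar>f x\<bar> * indicator {0<..<b} x \<partial>lebesgue) \<le> ennreal (M_rnorm \<gamma> \<psi> f * \<psi> b)"
proof -
  have meas: "set_borel_measurable lebesgue (ivl \<gamma>) f" using f by (simp add: M_space_def)
  have b0: "0 < b" using b by (simp add: ivl_def)
  have "(\<integral>\<^sup>+ x. ennreal \<bar>f x\<bar> * indicator {0<..<b} x \<partial>lebesgue) \<le> (\<integral>\<^sup>+ u\<in>{0<..<b}. rearr \<gamma> f u \<partial>lborel)"
    by (rule HL[OF meas]) (use sub_ivl[OF b] b0 in auto)
  also have "\<dots> \<le> M_norm \<gamma> \<psi> f * ennreal (\<psi> b)" by (rule L_le_norm[OF f b])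
  also have "\<dots> = ennreal (M_rnorm \<gamma> \<psi> f * \<psi> b)"
    using f psi_pos[OF b] by (simp add: M_space_def M_rnorm_def ennreal_mult)
  finally show ?thesis .
qed

lemma blk_integrable:
  assumes f: "f \<in> M_space \<gamma> \<psi>" and E: "E \<in> sets lebesgue" "E \<subseteq> {0<..<b}" and b: "b \<in> ivl \<gamma>"
  shows "integrable lebesgue (\<lambda>x. f x * indicator E x)"
proof (rule integrableI_bounded)
  have m: "Fm \<gamma> f \<in> borel_measurable lebesgue" using f by (simp add: M_space_def Fm_meas)
  have "(\<lambda>x. Fm \<gamma> f x * indicator E x) \<in> borel_measurable lebesgue" using m E by measurable
  moreover have "(\<lambda>x. Fm \<gamma> f x * indicator E x) = (\<lambda>x. f x * indicator E x)"
    using E sub_ivl[OF b] by (auto simp: Fm_def indicator_def fun_eq_iff)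
  ultimately show "(\<lambda>x. f x * indicator E x) \<in> borel_measurable lebesgue" by simp
  have "(\<integral>\<^sup>+ x. ennreal (norm (f x * indicator E x)) \<partial>lebesgue) = (\<integral>\<^sup>+ x. ennreal \<bar>f x\<bar> * indicator E x \<partial>lebesgue)"
    by (rule nn_integral_cong) (auto simp: indicator_def)
  also have "\<dots> \<le> ennreal (M_rnorm \<gamma> \<psi> f * \<psi> b)"
    using blk_nn_bound[OF f E b] interval_bound[OF f b] by (rule order_trans)
  also have "\<dots> < \<infinity>" by simp
  finally show "(\<integral>\<^sup>+ x. ennreal (norm (f x * indicator E x)) \<partial>lebesgue) < \<infinity>" .
qed

lemma blk_ennreal:
  assumes f: "f \<in> M_space \<gamma> \<psi>" and E: "E \<in> sets lebesgue" "E \<subseteq> {0<..<b}" and b: "b \<in> ivl \<gamma>"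
  shows "ennreal (blk E (\<lambda>x. \<bar>f x\<bar>)) = (\<integral>\<^sup>+ x. ennreal \<bar>f x\<bar> * indicator E x \<partial>lebesgue)"
proof -
  have i: "integrable lebesgue (\<lambda>x. \<bar>f x\<bar> * indicator E x)"
    using integrable_abs[OF blk_integrable[OF f E b]] by (simp add: abs_mult)
  have "(\<integral>\<^sup>+ x. ennreal (\<bar>f x\<bar> * indicator E x) \<partial>lebesgue) = blk E (\<lambda>x. \<bar>f x\<bar>)"
    unfolding blk_def by (rule nn_integral_eq_integral[OF i]) auto
  moreover have "(\<integral>\<^sup>+ x. ennreal (\<bar>f x\<bar> * indicator E x) \<partial>lebesgue) = (\<integral>\<^sup>+ x. ennreal \<bar>f x\<bar> * indicator E x \<partial>lebesgue)"
    by (rule nn_integral_cong) (auto simp: indicator_def)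
  ultimately show ?thesis by simp
qed

lemma blk_add:
  assumes f: "f \<in> M_space \<gamma> \<psi>" and g: "g \<in> M_space \<gamma> \<psi>" and E: "E \<in> sets lebesgue" "E \<subseteq> {0<..<b}" and b: "b \<in> ivl \<gamma>"
  shows "blk E (\<lambda>x. f x + g x) = blk E f + blk E g"
  unfolding blk_def using blk_integrable[OF f E b] blk_integrable[OF g E b]
  by (simp add: distrib_right)

lemma blk_pos:
  assumes E: "E \<subseteq> ivl \<gamma>" and fp: "AE x in lebesgue. x \<in> ivl \<gamma> \<longrightarrow> 0 \<le> f x"
  shows "0 \<le> blk E f"
  unfolding blk_def
  by (rule integral_nonneg_AE) (use fp E in \<open>auto simp: indicator_def elim: AE_mp\<close>)

lemma blk_sum:
  assumes f: "f \<in> M_space \<gamma> \<psi>" and J: "finite J" and dj: "disjoint_family_on E J"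
    and E: "\<And>j. j \<in> J \<Longrightarrow> E j \<in> sets lebesgue" "\<And>j. j \<in> J \<Longrightarrow> E j \<subseteq> {0<..<b}" and b: "b \<in> ivl \<gamma>"
  shows "(\<Sum>j\<in>J. blk (E j) (\<lambda>x. \<bar>f x\<bar>)) \<le> M_rnorm \<gamma> \<psi> f * \<psi> b"
proof -
  have nn: "0 \<le> blk (E j) (\<lambda>x. \<bar>f x\<bar>)" for j by (simp add: blk_def)
  have "ennreal (\<Sum>j\<in>J. blk (E j) (\<lambda>x. \<bar>f x\<bar>)) = (\<Sum>j\<in>J. ennreal (blk (E j) (\<lambda>x. \<bar>f x\<bar>)))"
    using nn by simp
  also have "\<dots> = (\<Sum>j\<in>J. (\<integral>\<^sup>+ x. ennreal \<bar>f x\<bar> * indicator (E j) x \<partial>lebesgue))"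
  proof (rule sum.cong[OF refl])
    fix j assume j: "j \<in> J"
    show "ennreal (blk (E j) (\<lambda>x. \<bar>f x\<bar>)) = (\<integral>\<^sup>+ x. ennreal \<bar>f x\<bar> * indicator (E j) x \<partial>lebesgue)"
      by (rule blk_ennreal[OF f E(1)[OF j] E(2)[OF j] b])
  qed
  also have "\<dots> = (\<integral>\<^sup>+ x. (\<Sum>j\<in>J. ennreal \<bar>f x\<bar> * indicator (E j) x) \<partial>lebesgue)"
  proof (rule nn_integral_sum[symmetric])
    fix j assume j: "j \<in> J"
    have m: "Fm \<gamma> f \<in> borel_measurable lebesgue" using f by (simp add: M_space_def Fm_meas)
    have "(\<lambda>x. ennreal \<bar>Fm \<gamma> f x\<bar> * indicator (E j) x) \<in> borel_measurable lebesgue" using m E(1)[OF j] by measurable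
    moreover have "(\<lambda>x. ennreal \<bar>Fm \<gamma> f x\<bar> * indicator (E j) x) = (\<lambda>x. ennreal \<bar>f x\<bar> * indicator (E j) x)"
      using E(2)[OF j] sub_ivl[OF b] by (auto simp: Fm_def indicator_def fun_eq_iff)
    ultimately show "(\<lambda>x. ennreal \<bar>f x\<bar> * indicator (E j) x) \<in> borel_measurable lebesgue" by simp
  qed
  also have "\<dots> \<le> (\<integral>\<^sup>+ x. ennreal \<bar>f x\<bar> * indicator {0<..<b} x \<partial>lebesgue)"
  proof (rule nn_integral_mono)
    fix x
    show "(\<Sum>j\<in>J. ennreal \<bar>f x\<bar> * indicator (E j) x) \<le> ennreal \<bar>f x\<bar> * indicator {0<..<b} x"
    proof (cases "\<exists>j\<in>J. x \<in> E j")
      case True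
      then obtain j where j: "j \<in> J" "x \<in> E j" by auto
      have "(\<Sum>j\<in>J. ennreal \<bar>f x\<bar> * indicator (E j) x) = ennreal \<bar>f x\<bar>"
        using sum_indicator_disjoint_family[OF dj j(2) J j(1), of "\<lambda>_. ennreal \<bar>f x\<bar>"] .
      moreover have "x \<in> {0<..<b}" using E(2)[OF j(1)] j(2) by auto
      ultimately show ?thesis by simp
    next
      case False
      then have "(\<Sum>j\<in>J. ennreal \<bar>f x\<bar> * indicator (E j) x) = 0"
        by (intro sum.neutral) (auto simp: indicator_def)
      then show ?thesis by simp
    qed
  qed
  also have "\<dots> \<le> ennreal (M_rnorm \<gamma> \<psi> f * \<psi> b)" by (rule interval_bound[OF f b])
  finally show ?thesis
    using psi_pos[OF b] M_rnorm_nonneg[of \<gamma> \<psi> f] by (simp add: ennreal_le_iff)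
qed

end



context psi_ctx
begin

lemma witness_gen:
  fixes E :: "nat \<Rightarrow> real set" and v e :: "nat \<Rightarrow> real"
  assumes Eb: "\<And>k. E k \<in> sets borel" and Ei: "\<And>k. E k \<subseteq> ivl \<gamma>" and dj: "disjoint_family E"
    and Em: "\<And>k. emeasure lebesgue (E k) \<le> ennreal (e k)"
    and v: "\<And>k. 0 \<le> v k"
    and h: "h = (\<lambda>x. \<Sum>k. v k * indicator (E k) x)"
  shows "\<And>x k. x \<in> E k \<Longrightarrow> h x = v k"
    and "\<And>x. 0 \<le> h x"
    and "set_borel_measurable lebesgue (ivl \<gamma>) h"
    and "\<And>t. 0 \<le> t \<Longrightarrow> (\<integral>\<^sup>+ u\<in>{0<..<t}. rearr \<gamma> h u \<partial>lborel) \<le> (\<Sum>k. ennreal (v k) * min (ennreal t) (ennreal (e k)))"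
proof -
  have val: "h x = v k" if "x \<in> E k" for x k
  proof -
    have "h x = (\<Sum>i\<in>{k}. v i * indicator (E i) x)"
      unfolding h
    proof (rule suminf_finite)
      fix i assume "i \<notin> {k}"
      then have "x \<notin> E i" using dj that by (auto simp: disjoint_family_on_def)
      then show "v i * indicator (E i) x = 0" by simp
    qed simp
    then show ?thesis using that by simp
  qed
  show "\<And>x k. x \<in> E k \<Longrightarrow> h x = v k" by (rule val)
  have zero: "h x = 0" if "\<forall>k. x \<notin> E k" for x
    unfolding h using that by simp
  show nn: "\<And>x. 0 \<le> h x"
  proof -
    fix x show "0 \<le> h x"
      by (cases "\<exists>k. x \<in> E k") (auto simp: val zero v)
  qed
  have hm: "h \<in> borel_measurable borel" unfolding h using Eb by measurable
  then have "(\<lambda>x. indicator (ivl \<gamma>) x * h x) \<in> borel_measurable borel" by measurable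
  then show meas: "set_borel_measurable lebesgue (ivl \<gamma>) h"
    by (simp add: set_borel_measurable_def measurable_completion)
  fix t :: real assume t: "0 \<le> t"
  show "(\<integral>\<^sup>+ u\<in>{0<..<t}. rearr \<gamma> h u \<partial>lborel) \<le> (\<Sum>k. ennreal (v k) * min (ennreal t) (ennreal (e k)))"
  proof (rule order_trans[OF Lbound[OF meas v _ t, where e="\<lambda>k. ennreal (e k)"]])
    fix s :: real assume s: "0 < s"
    define F where "F k = (if s < v k then E k else {})" for k
    have sub: "{x \<in> ivl \<gamma>. ennreal s < ennreal \<bar>h x\<bar>} \<subseteq> (\<Union>k. F k)"
    proof
      fix x assume x: "x \<in> {x \<in> ivl \<gamma>. ennreal s < ennreal \<bar>h x\<bar>}"
      then have hx: "s < \<bar>h x\<bar>" using s by (simp add: ennreal_less_iff)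
      then have "\<exists>k. x \<in> E k" using zero s by force
      then obtain k where k: "x \<in> E k" by auto
      then have "s < v k" using hx val[OF k] v[of k] by simp
      then show "x \<in> (\<Union>k. F k)" using k by (auto simp: F_def)
    qed
    have Fm: "range F \<subseteq> sets lebesgue" using Eb by (auto simp: F_def)
    have "distr_fn \<gamma> h (ennreal s) \<le> emeasure lebesgue (\<Union>k. F k)"
      unfolding distr_fn_def by (rule emeasure_mono[OF sub]) (use Fm in auto)
    also have "\<dots> \<le> (\<Sum>k. emeasure lebesgue (F k))" by (rule emeasure_subadditive_countably[OF Fm])
    also have "\<dots> \<le> (\<Sum>k. indicator {..<v k} s * ennreal (e k))"
    proof (rule suminf_le)
      fix k show "emeasure lebesgue (F k) \<le> indicator {..<v k} s * ennreal (e k)"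
        using Em[of k] by (auto simp: F_def indicator_def)
    qed auto
    finally show "distr_fn \<gamma> h (ennreal s) \<le> (\<Sum>k. indicator {..<v k} s * ennreal (e k))" .
  qed simp
qed

lemma measure_Ioo_leb: "a \<le> b \<Longrightarrow> measure lebesgue {a<..<b::real} = b - a"
  by simp

lemma kernel_case:
  fixes a e :: "nat \<Rightarrow> real"
  assumes e: "\<And>j. e j \<in> ivl \<gamma>" and a: "\<And>j. 0 \<le> a j"
    and dj: "\<And>i j. i \<noteq> j \<Longrightarrow> {a i<..<a i + e i} \<inter> {a j<..<a j + e j} = {}"
    and cover: "\<And>N. \<exists>b\<in>ivl \<gamma>. \<psi> b \<le> C \<and> (\<forall>j<N. a j + e j \<le> b)"
    and c: "0 < c" "\<And>j. c \<le> \<psi> (e j)"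
  shows "\<not> dual_order_continuous \<gamma> \<psi>"
proof -
  define E where "E j = {a j<..<a j + e j}" for j
  have Es: "E j \<in> sets lebesgue" for j by (simp add: E_def)
  have Eb: "\<exists>b\<in>ivl \<gamma>. E j \<subseteq> {0<..<b}" for j
  proof -
    obtain b where b: "b \<in> ivl \<gamma>" "\<forall>i<Suc j. a i + e i \<le> b" using cover by blast
    then have "E j \<subseteq> {0<..<b}" using a[of j] by (auto simp: E_def)
    then show ?thesis using b by auto
  qed
  have Ei: "E j \<subseteq> ivl \<gamma>" for j using Eb[of j] sub_ivl by blast
  have e0: "0 < e j" for j using e[of j] by (simp add: ivl_def)
  define h where "h j = (\<lambda>x. \<Sum>k. (if k = 0 then \<psi> (e j) / e j else 0) * indicator (if k = 0 then E j else {}) x)" for j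
  have W: "\<And>x (k::nat). x \<in> (if k = 0 then E j else {}) \<Longrightarrow> h j x = (if k = 0 then \<psi> (e j) / e j else 0)"
     "\<And>x. 0 \<le> h j x"
     "set_borel_measurable lebesgue (ivl \<gamma>) (h j)"
     "\<And>t. 0 \<le> t \<Longrightarrow> (\<integral>\<^sup>+ u\<in>{0<..<t}. rearr \<gamma> (h j) u \<partial>lborel)
        \<le> (\<Sum>k. ennreal (if k = 0 then \<psi> (e j) / e j else 0) * min (ennreal t) (ennreal (e j)))" for j
  proof -
    have "psi_ctx \<gamma> \<psi>" ..
    note wg = witness_gen[of "\<lambda>k. if k = 0 then E j else {}" "\<lambda>_. e j" "\<lambda>k. if k = 0 then \<psi> (e j) / e j else 0" "h j"]
    have A: "(if k = 0 then E j else {}) \<in> sets borel" for k by (simp add: E_def)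
    have B: "(if k = 0 then E j else {}) \<subseteq> ivl \<gamma>" for k using Ei by simp
    have C: "disjoint_family (\<lambda>k. if k = 0 then E j else {})" by (auto simp: disjoint_family_on_def)
    have D: "emeasure lebesgue (if k = 0 then E j else {}) \<le> ennreal (e j)" for k
      using e0[of j] by (simp add: E_def)
    have F: "0 \<le> (if k = 0 then \<psi> (e j) / e j else 0)" for k
      using less_imp_le[OF divide_pos_pos[OF psi_pos[OF e[of j]] e0[of j]]] by simp
    have hd: "h j = (\<lambda>x. \<Sum>k. (if k = 0 then \<psi> (e j) / e j else 0) * indicator (if k = 0 then E j else {}) x)"
      by (simp add: h_def)
    note wg' = wg[OF A B C D F hd]
    show "\<And>x (k::nat). x \<in> (if k = 0 then E j else {}) \<Longrightarrow> h j x = (if k = 0 then \<psi> (e j) / e j else 0)"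
      using wg'(1) by blast
    show "\<And>x. 0 \<le> h j x" by (rule wg'(2))
    show "set_borel_measurable lebesgue (ivl \<gamma>) (h j)" by (rule wg'(3))
    show "\<And>t. 0 \<le> t \<Longrightarrow> (\<integral>\<^sup>+ u\<in>{0<..<t}. rearr \<gamma> (h j) u \<partial>lborel)
        \<le> (\<Sum>k. ennreal (if k = 0 then \<psi> (e j) / e j else 0) * min (ennreal t) (ennreal (e j)))"
      by (rule wg'(4))
  qed
  have hval: "h j x = \<psi> (e j) / e j" if "x \<in> E j" for j x using W(1)[of x "0::nat" j] that by simp
  have hnorm: "h j \<in> M_space \<gamma> \<psi> \<and> M_rnorm \<gamma> \<psi> (h j) \<le> 1" for j
  proof -
    have L: "(\<integral>\<^sup>+ u\<in>{0<..<t}. rearr \<gamma> (h j) u \<partial>lborel) \<le> ennreal (\<psi> t)" if t: "t \<in> ivl \<gamma>" for t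
    proof -
      have t0: "0 \<le> t" using t by (simp add: ivl_def)
      have "(\<Sum>k. ennreal (if k = 0 then \<psi> (e j) / e j else 0) * min (ennreal t) (ennreal (e j)))
          = (\<Sum>k\<in>{0::nat}. ennreal (if k = 0 then \<psi> (e j) / e j else 0) * min (ennreal t) (ennreal (e j)))"
        by (rule suminf_finite) auto
      also have "\<dots> = ennreal (\<psi> (e j) / e j) * ennreal (min t (e j))"
        using e0[of j] t0 by (simp add: min_ennreal)
      also have "\<dots> = ennreal (\<psi> (e j) / e j * min t (e j))"
        using e0[of j] t0 less_imp_le[OF divide_pos_pos[OF psi_pos[OF e[of j]] e0[of j]]]
        by (intro ennreal_mult[symmetric]) auto
      also have "\<dots> \<le> ennreal (\<psi> t)"
      proof (rule ennreal_leI)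
        have eD: "e j \<in> Dom" "t \<in> Dom" using e[of j] t by (auto simp: ivl_def)
        show "\<psi> (e j) / e j * min t (e j) \<le> \<psi> t"
        proof (cases "t \<le> e j")
          case True
          then have "\<psi> (e j) / e j * min t (e j) = t / e j * \<psi> (e j)" by (simp add: min_def)
          also have "\<dots> \<le> \<psi> t" using ratio[OF eD(1)] t True by (simp add: ivl_def)
          finally show ?thesis .
        next
          case False
          then have "\<psi> (e j) / e j * min t (e j) = \<psi> (e j)" using e0[of j] by (simp add: min_def)
          also have "\<dots> \<le> \<psi> t" using psi_mono[OF eD] False by simp
          finally show ?thesis .
        qed
      qed
      finally show ?thesis using W(4)[OF t0, of j] by (rule order_trans[rotated])
    qed
    show ?thesis using norm_le1[OF W(3) L] by auto
  qed
  define Psi where "Psi j f = blk (E j) f" for j f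
  show ?thesis
  proof (rule not_doc[where Psi=Psi and h=h and c=c and C=C])
    fix j f g assume f: "f \<in> M_space \<gamma> \<psi>" and g: "g \<in> M_space \<gamma> \<psi>"
    obtain b where b: "b \<in> ivl \<gamma>" "E j \<subseteq> {0<..<b}" using Eb by blast
    show "Psi j (\<lambda>x. f x + g x) = Psi j f + Psi j g" unfolding Psi_def by (rule blk_add[OF f g Es b(2) b(1)])
  next
    fix j :: nat and f :: "real \<Rightarrow> real" and c' :: real show "Psi j (\<lambda>x. c' * f x) = c' * Psi j f" unfolding Psi_def by (rule blk_mult)
  next
    fix j and f :: "real \<Rightarrow> real" assume "AE x in lebesgue. x \<in> ivl \<gamma> \<longrightarrow> 0 \<le> f x"
    then show "0 \<le> Psi j f" unfolding Psi_def by (rule blk_pos[OF Ei])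
  next
    fix j f show "\<bar>Psi j f\<bar> \<le> Psi j (\<lambda>x. \<bar>f x\<bar>)" unfolding Psi_def by (rule blk_abs)
  next
    fix N f assume f: "f \<in> M_space \<gamma> \<psi>"
    obtain b where b: "b \<in> ivl \<gamma>" "\<psi> b \<le> C" "\<forall>j<N. a j + e j \<le> b" using cover by blast
    have "(\<Sum>j<N. Psi j (\<lambda>x. \<bar>f x\<bar>)) \<le> M_rnorm \<gamma> \<psi> f * \<psi> b"
      unfolding Psi_def
    proof (rule blk_sum[OF f _ _ _ _ b(1)])
      show "disjoint_family_on E {..<N}" using dj by (auto simp: disjoint_family_on_def E_def)
      fix j assume "j \<in> {..<N}"
      then show "E j \<subseteq> {0<..<b}" using b(3) a[of j] by (auto simp: E_def)
    qed (auto simp: Es)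
    also have "\<dots> \<le> C * M_rnorm \<gamma> \<psi> f"
      using b(2) M_rnorm_nonneg[of \<gamma> \<psi> f] by (simp add: mult.commute mult_right_mono)
    finally show "(\<Sum>j<N. Psi j (\<lambda>x. \<bar>f x\<bar>)) \<le> C * M_rnorm \<gamma> \<psi> f" .
  next
    fix j show "h j \<in> M_space \<gamma> \<psi>" using hnorm by auto
  next
    fix j show "M_rnorm \<gamma> \<psi> (h j) \<le> 1" using hnorm by auto
  next
    fix j x show "0 \<le> h j x" by (rule W(2))
  next
    fix j
    have "Psi j (h j) = (\<integral>x. \<psi> (e j) / e j * indicator (E j) x \<partial>lebesgue)"
      unfolding Psi_def blk_def by (rule Bochner_Integration.integral_cong) (auto simp: indicator_def hval)
    also have "\<dots> = \<psi> (e j) / e j * measure lebesgue (E j)" by simp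
    also have "\<dots> = \<psi> (e j)" using e0[of j] by (simp add: E_def)
    finally show "c \<le> Psi j (h j)" using c(2)[of j] by simp
  qed (rule c(1))
qed

end



lemma ultra_Lim:
  fixes x :: "nat \<Rightarrow> real"
  assumes U: "ultra U" and B: "\<And>k. \<bar>x k\<bar> \<le> B"
  shows "(x \<longlongrightarrow> Lim U x) U"
proof -
  have "\<exists>l. (x \<longlongrightarrow> l) U" by (rule ultra_conv[of U x B]) (use U B in auto)
  then obtain l where l: "(x \<longlongrightarrow> l) U" by blast
  have "U \<noteq> bot" using U by (simp add: ultra_def)
  then have "Lim U x = l" using l by (intro tendsto_Lim) simp_all
  then show ?thesis using l by simp
qed

lemma ultra_Lim_eq:
  assumes U: "ultra U" and "(x \<longlongrightarrow> l) U"
  shows "Lim U x = (l::real)"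
proof -
  have "U \<noteq> bot" using U by (simp add: ultra_def)
  then show ?thesis using assms(2) by (intro tendsto_Lim) simp_all
qed

context psi_ctx
begin

lemma singular_case:
  fixes t :: "nat \<Rightarrow> real" and K :: "nat \<Rightarrow> nat"
  assumes t: "\<And>k. 0 < t k" and K: "\<And>k. k + 8 \<le> K k"
    and u: "\<And>k. K k * t k \<in> ivl \<gamma>"
    and dj: "\<And>k k'. k \<noteq> k' \<Longrightarrow> {t k<..<K k * t k} \<inter> {t k'<..<K k' * t k'} = {}"
    and S4: "\<And>\<tau>. \<tau> \<in> ivl \<gamma> \<Longrightarrow> (\<Sum>k. ennreal (\<psi> (K k * t k) * min 1 (\<tau> / t k))) \<le> ennreal (8 * \<psi> \<tau>)"
  shows "\<not> dual_order_continuous \<gamma> \<psi>"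
proof -
  obtain U :: "nat filter" where U: "U \<le> sequentially" "ultra U"
    using ex_ultra_below[of sequentially] by auto
  have Unb: "U \<noteq> bot" using U by (simp add: ultra_def)
  define uu where "uu k = K k * t k" for k
  have uu: "uu k \<in> ivl \<gamma>" for k using u by (simp add: uu_def)
  have pu: "0 < \<psi> (uu k)" for k by (rule psi_pos[OF uu])
  define B where "B k j = {real j * t k <..< (real j + 1) * t k}" for k j
  have Bs: "B k j \<in> sets lebesgue" for k j by (simp add: B_def)
  have Bsub: "B k j \<subseteq> {t k<..<uu k}" if "1 \<le> j" "j < K k" for k j
  proof -
    have "t k \<le> real j * t k" using that t[of k] by simp
    moreover have "(real j + 1) * t k \<le> real (K k) * t k"
      using that t[of k] by (intro mult_right_mono) auto
    ultimately show ?thesis by (auto simp: B_def uu_def)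
  qed
  have Bsub0: "B k j \<subseteq> {0<..<uu k}" if "1 \<le> j" "j < K k" for k j
    using Bsub[OF that] t[of k] by auto
  have Bdj: "disjoint_family_on (B k) J" for k J
    unfolding disjoint_family_on_def
  proof (intro ballI impI)
    fix i j assume "i \<in> J" "j \<in> J" and ij: "i \<noteq> j"
    show "B k i \<inter> B k j = {}"
    proof (rule ccontr)
      assume "B k i \<inter> B k j \<noteq> {}"
      then obtain x where "x \<in> B k i" "x \<in> B k j" by blast
      then have x: "real i * t k < x" "x < (real i + 1) * t k" "real j * t k < x" "x < (real j + 1) * t k"
        by (auto simp: B_def)
      have "real i * t k < (real j + 1) * t k" "real j * t k < (real i + 1) * t k" using x by linarith+
      then have "real i < real j + 1" "real j < real i + 1"
        using mult_less_cancel_right_pos[OF t[of k]] by blast+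
      then show False using ij by linarith
    qed
  qed
  have Bmeas: "measure lebesgue (B k j) = t k" for k j using t[of k] by (simp add: B_def algebra_simps)
  define ph where "ph k j f = (if 1 \<le> j \<and> j < K k then blk (B k j) f / \<psi> (uu k) else 0)" for k j f
  have ph_bound: "\<bar>ph k j f\<bar> \<le> M_rnorm \<gamma> \<psi> f" if f: "f \<in> M_space \<gamma> \<psi>" for k j f
  proof (cases "1 \<le> j \<and> j < K k")
    case True
    have "\<bar>blk (B k j) f\<bar> \<le> blk (B k j) (\<lambda>x. \<bar>f x\<bar>)" by (rule blk_abs)
    also have "\<dots> = (\<Sum>i\<in>{j}. blk (B k i) (\<lambda>x. \<bar>f x\<bar>))" by simp
    also have "\<dots> \<le> M_rnorm \<gamma> \<psi> f * \<psi> (uu k)"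
      by (rule blk_sum[OF f _ _ _ _ uu]) (use Bs Bsub0 True Bdj in auto)
    finally show ?thesis using True pu[of k] by (simp add: ph_def divide_le_eq abs_div)
  qed (use M_rnorm_nonneg in \<open>auto simp: ph_def\<close>)
  have conv: "((\<lambda>k. ph k j f) \<longlongrightarrow> Lim U (\<lambda>k. ph k j f)) U" if f: "f \<in> M_space \<gamma> \<psi>" for j f
    by (rule ultra_Lim[OF U(2) ph_bound[OF f]])
  define Psi where "Psi j f = Lim U (\<lambda>k. ph k (Suc j) f)" for j f
  define v where "v n k = (if Suc n < K k then \<psi> (uu k) / (8 * t k) else 0)" for n k
  define E where "E n k = (if Suc n < K k then B k (Suc n) else {})" for n k
  define h where "h n = (\<lambda>x. \<Sum>k. v n k * indicator (E n k) x)" for n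
  have vnn: "0 \<le> v n k" for n k using pu[of k] t[of k] by (simp add: v_def)
  have W: "\<And>x k. x \<in> E n k \<Longrightarrow> h n x = v n k"
     "\<And>x. 0 \<le> h n x"
     "set_borel_measurable lebesgue (ivl \<gamma>) (h n)"
     "\<And>\<tau>. 0 \<le> \<tau> \<Longrightarrow> (\<integral>\<^sup>+ u\<in>{0<..<\<tau>}. rearr \<gamma> (h n) u \<partial>lborel)
        \<le> (\<Sum>k. ennreal (v n k) * min (ennreal \<tau>) (ennreal (t k)))" for n
  proof -
    have A: "E n k \<in> sets borel" for k by (simp add: E_def B_def)
    have Bi: "E n k \<subseteq> ivl \<gamma>" for k using Bsub0[of "Suc n" k] sub_ivl[OF uu[of k]] by (auto simp: E_def)
    have C: "disjoint_family (E n)"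
      unfolding disjoint_family_on_def
    proof (intro ballI impI)
      fix k k' :: nat assume kk: "k \<noteq> k'"
      show "E n k \<inter> E n k' = {}"
      proof (rule ccontr)
        assume "E n k \<inter> E n k' \<noteq> {}"
        then obtain x where x: "x \<in> E n k" "x \<in> E n k'" by blast
        then have "Suc n < K k" "Suc n < K k'" by (auto simp: E_def split: if_splits)
        then have "x \<in> {t k<..<uu k}" "x \<in> {t k'<..<uu k'}"
          using x Bsub[of "Suc n" k] Bsub[of "Suc n" k'] by (auto simp: E_def)
        then show False using dj[OF kk] by (auto simp: uu_def)
      qed
    qed
    have D: "emeasure lebesgue (E n k) \<le> ennreal (t k)" for k
      using t[of k] by (auto simp: E_def B_def algebra_simps)
    have hd: "h n = (\<lambda>x. \<Sum>k. v n k * indicator (E n k) x)" by (simp add: h_def)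
    note wg = witness_gen[OF A Bi C D vnn hd]
    show "\<And>x k. x \<in> E n k \<Longrightarrow> h n x = v n k" using wg(1) by blast
    show "\<And>x. 0 \<le> h n x" by (rule wg(2))
    show "set_borel_measurable lebesgue (ivl \<gamma>) (h n)" by (rule wg(3))
    show "\<And>\<tau>. 0 \<le> \<tau> \<Longrightarrow> (\<integral>\<^sup>+ u\<in>{0<..<\<tau>}. rearr \<gamma> (h n) u \<partial>lborel)
        \<le> (\<Sum>k. ennreal (v n k) * min (ennreal \<tau>) (ennreal (t k)))" by (rule wg(4))
  qed
  have hnorm: "h n \<in> M_space \<gamma> \<psi> \<and> M_rnorm \<gamma> \<psi> (h n) \<le> 1" for n
  proof -
    have L: "(\<integral>\<^sup>+ u\<in>{0<..<\<tau>}. rearr \<gamma> (h n) u \<partial>lborel) \<le> ennreal (\<psi> \<tau>)" if tau: "\<tau> \<in> ivl \<gamma>" for \<tau>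
    proof -
      have t0: "0 \<le> \<tau>" using tau by (simp add: ivl_def)
      have "(\<Sum>k. ennreal (v n k) * min (ennreal \<tau>) (ennreal (t k)))
          \<le> (\<Sum>k. ennreal (1/8) * ennreal (\<psi> (K k * t k) * min 1 (\<tau> / t k)))"
      proof (rule suminf_le)
        fix k
        have tk: "0 < t k" by (rule t)
        have "ennreal (v n k) * min (ennreal \<tau>) (ennreal (t k)) = ennreal (v n k * min \<tau> (t k))"
          using t0 tk vnn[of n k] by (simp add: min_ennreal ennreal_mult)
        also have "\<dots> \<le> ennreal (1/8 * (\<psi> (K k * t k) * min 1 (\<tau> / t k)))"
        proof (rule ennreal_leI)
          have "v n k * min \<tau> (t k) \<le> \<psi> (uu k) / (8 * t k) * min \<tau> (t k)"
            using pu[of k] tk t0 by (intro mult_right_mono) (auto simp: v_def)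
          also have "\<dots> = 1/8 * (\<psi> (K k * t k) * min 1 (\<tau> / t k))"
            using tk by (simp add: uu_def min_def field_simps)
          finally show "v n k * min \<tau> (t k) \<le> 1/8 * (\<psi> (K k * t k) * min 1 (\<tau> / t k))" .
        qed
        also have "\<dots> = ennreal (1/8) * ennreal (\<psi> (K k * t k) * min 1 (\<tau> / t k))"
          using pu[of k] t0 tk by (intro ennreal_mult) (auto simp: uu_def)
        finally show "ennreal (v n k) * min (ennreal \<tau>) (ennreal (t k)) \<le> ennreal (1/8) * ennreal (\<psi> (K k * t k) * min 1 (\<tau> / t k))" .
      qed auto
      also have "\<dots> = ennreal (1/8) * (\<Sum>k. ennreal (\<psi> (K k * t k) * min 1 (\<tau> / t k)))"
        by (rule ennreal_suminf_cmult)
      also have "\<dots> \<le> ennreal (1/8) * ennreal (8 * \<psi> \<tau>)"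
        by (rule mult_left_mono[OF S4[OF tau]]) simp
      also have "\<dots> = ennreal (\<psi> \<tau>)" using psi_pos[OF tau]
        by (simp add: ennreal_mult[symmetric])
      finally show ?thesis using W(4)[OF t0, of n] by (rule order_trans[rotated])
    qed
    show ?thesis using norm_le1[OF W(3) L] by auto
  qed
  have ph_add: "ph k j (\<lambda>x. f x + g x) = ph k j f + ph k j g" if "f \<in> M_space \<gamma> \<psi>" "g \<in> M_space \<gamma> \<psi>" for k j f g
    using blk_add[OF that Bs Bsub0 uu] by (auto simp: ph_def add_divide_distrib)
  show ?thesis
  proof (rule not_doc[where Psi=Psi and h=h and c="1/8" and C=1])
    fix j f g assume f: "f \<in> M_space \<gamma> \<psi>" and g: "g \<in> M_space \<gamma> \<psi>"
    have fg: "(\<lambda>x. f x + g x) \<in> M_space \<gamma> \<psi> \<or> True" by simp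
    have "((\<lambda>k. ph k (Suc j) (\<lambda>x. f x + g x)) \<longlongrightarrow> Psi j f + Psi j g) U"
      unfolding Psi_def ph_add[OF f g] by (intro tendsto_add conv f g)
    then show "Psi j (\<lambda>x. f x + g x) = Psi j f + Psi j g"
      unfolding Psi_def by (rule ultra_Lim_eq[OF U(2)])
  next
    fix j :: nat and f :: "real \<Rightarrow> real" and c' :: real assume f: "f \<in> M_space \<gamma> \<psi>"
    have "((\<lambda>k. ph k (Suc j) (\<lambda>x. c' * f x)) \<longlongrightarrow> c' * Psi j f) U"
    proof -
      have eq: "(\<lambda>k. ph k (Suc j) (\<lambda>x. c' * f x)) = (\<lambda>k. c' * ph k (Suc j) f)"
        by (simp add: ph_def blk_mult fun_eq_iff)
      show ?thesis unfolding eq Psi_def by (intro tendsto_mult_left conv f)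
    qed
    then show "Psi j (\<lambda>x. c' * f x) = c' * Psi j f"
      unfolding Psi_def by (rule ultra_Lim_eq[OF U(2)])
  next
    fix j and f :: "real \<Rightarrow> real" assume f: "f \<in> M_space \<gamma> \<psi>" and fp: "AE x in lebesgue. x \<in> ivl \<gamma> \<longrightarrow> 0 \<le> f x"
    have "\<forall>k. 0 \<le> ph k (Suc j) f"
    proof
      fix k show "0 \<le> ph k (Suc j) f"
        using blk_pos[OF _ fp, of "B k (Suc j)"] Bsub0[of "Suc j" k] sub_ivl[OF uu[of k]] pu[of k]
        by (auto simp: ph_def)
    qed
    then show "0 \<le> Psi j f" unfolding Psi_def
      by (intro tendsto_lowerbound[OF conv[OF f] _ Unb]) (simp add: always_eventually)
  next
    fix j and f :: "real \<Rightarrow> real" assume f: "f \<in> M_space \<gamma> \<psi>"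
    have a: "((\<lambda>k. \<bar>ph k (Suc j) f\<bar>) \<longlongrightarrow> \<bar>Psi j f\<bar>) U" unfolding Psi_def by (intro tendsto_rabs conv f)
    have b: "((\<lambda>k. ph k (Suc j) (\<lambda>x. \<bar>f x\<bar>)) \<longlongrightarrow> Psi j (\<lambda>x. \<bar>f x\<bar>)) U"
      unfolding Psi_def by (intro conv M_space_abs f)
    have "\<forall>k. \<bar>ph k (Suc j) f\<bar> \<le> ph k (Suc j) (\<lambda>x. \<bar>f x\<bar>)"
    proof
      fix k
      have "\<bar>blk (B k (Suc j)) f\<bar> / \<psi> (uu k) \<le> blk (B k (Suc j)) (\<lambda>x. \<bar>f x\<bar>) / \<psi> (uu k)"
        using pu[of k] by (intro divide_right_mono blk_abs) auto
      then show "\<bar>ph k (Suc j) f\<bar> \<le> ph k (Suc j) (\<lambda>x. \<bar>f x\<bar>)"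
        using pu[of k] by (auto simp: ph_def abs_div)
    qed
    then show "\<bar>Psi j f\<bar> \<le> Psi j (\<lambda>x. \<bar>f x\<bar>)"
      by (intro tendsto_le[OF Unb b a]) (simp add: always_eventually)
  next
    fix N and f :: "real \<Rightarrow> real" assume f: "f \<in> M_space \<gamma> \<psi>"
    have fa: "(\<lambda>x. \<bar>f x\<bar>) \<in> M_space \<gamma> \<psi>" by (rule M_space_abs[OF f])
    have lim: "((\<lambda>k. \<Sum>j<N. ph k (Suc j) (\<lambda>x. \<bar>f x\<bar>)) \<longlongrightarrow> (\<Sum>j<N. Psi j (\<lambda>x. \<bar>f x\<bar>))) U"
      unfolding Psi_def by (intro tendsto_sum conv fa)
    have bnd: "(\<Sum>j<N. ph k (Suc j) (\<lambda>x. \<bar>f x\<bar>)) \<le> M_rnorm \<gamma> \<psi> f" for k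
    proof -
      let ?J = "{j. j < N \<and> Suc j < K k}"
      have "(\<Sum>j<N. ph k (Suc j) (\<lambda>x. \<bar>f x\<bar>)) = (\<Sum>j\<in>?J. blk (B k (Suc j)) (\<lambda>x. \<bar>f x\<bar>)) / \<psi> (uu k)"
      proof -
        have "(\<Sum>j<N. ph k (Suc j) (\<lambda>x. \<bar>f x\<bar>)) = (\<Sum>j\<in>?J. ph k (Suc j) (\<lambda>x. \<bar>f x\<bar>))"
          by (rule sum.mono_neutral_right) (auto simp: ph_def)
        also have "\<dots> = (\<Sum>j\<in>?J. blk (B k (Suc j)) (\<lambda>x. \<bar>f x\<bar>) / \<psi> (uu k))"
          by (rule sum.cong) (auto simp: ph_def)
        finally show ?thesis by (simp add: sum_divide_distrib)
      qed
      also have "\<dots> \<le> M_rnorm \<gamma> \<psi> f * \<psi> (uu k) / \<psi> (uu k)"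
      proof (rule divide_right_mono)
        show "(\<Sum>j\<in>?J. blk (B k (Suc j)) (\<lambda>x. \<bar>f x\<bar>)) \<le> M_rnorm \<gamma> \<psi> f * \<psi> (uu k)"
        proof (rule blk_sum[OF f _ _ _ _ uu])
          show "disjoint_family_on (\<lambda>j. B k (Suc j)) ?J"
            using Bdj[of k UNIV] by (auto simp: disjoint_family_on_def)
        qed (use Bs Bsub0 in auto)
      qed (use pu in \<open>auto intro: less_imp_le\<close>)
      also have "\<dots> = M_rnorm \<gamma> \<psi> f" using pu[of k] by simp
      finally show ?thesis .
    qed
    have "(\<Sum>j<N. Psi j (\<lambda>x. \<bar>f x\<bar>)) \<le> M_rnorm \<gamma> \<psi> f"
      by (intro tendsto_upperbound[OF lim _ Unb]) (simp add: bnd always_eventually)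
    then show "(\<Sum>j<N. Psi j (\<lambda>x. \<bar>f x\<bar>)) \<le> 1 * M_rnorm \<gamma> \<psi> f" by simp
  next
    fix n show "h n \<in> M_space \<gamma> \<psi>" using hnorm by auto
  next
    fix n show "M_rnorm \<gamma> \<psi> (h n) \<le> 1" using hnorm by auto
  next
    fix n x show "0 \<le> h n x" by (rule W(2))
  next
    fix n
    have ev: "eventually (\<lambda>k. ph k (Suc n) (h n) = 1/8) sequentially"
    proof (rule eventually_sequentiallyI[of n])
      fix k assume "n \<le> k"
      then have kk: "Suc n < K k" using K[of k] by simp
      have "blk (B k (Suc n)) (h n) = (\<integral>x. v n k * indicator (B k (Suc n)) x \<partial>lebesgue)"
        unfolding blk_def
        by (rule Bochner_Integration.integral_cong) (auto simp: indicator_def W(1)[of _ n k] E_def kk)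
      also have "\<dots> = v n k * t k" by (simp add: Bmeas)
      also have "\<dots> = \<psi> (uu k) / 8" using t[of k] kk by (simp add: v_def)
      finally show "ph k (Suc n) (h n) = 1/8" using kk pu[of k] by (simp add: ph_def)
    qed
    have "((\<lambda>k. ph k (Suc n) (h n)) \<longlongrightarrow> 1/8) U"
      by (rule tendsto_eventually) (rule filter_leD[OF U(1) ev])
    then have "Psi n (h n) = 1/8" unfolding Psi_def by (rule ultra_Lim_eq[OF U(2)])
    then show "1/8 \<le> Psi n (h n)" by simp
  qed simp
qed

end



lemma decay_up:
  fixes x :: "nat \<Rightarrow> real"
  assumes st: "\<And>k. x (Suc k) \<le> x k / 2" and mk: "m \<le> k"
  shows "x k \<le> (1/2)^(k - m) * x m"
  using mk
proof (induction k)
  case 0 then show ?case by simp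
next
  case (Suc k)
  show ?case
  proof (cases "m = Suc k")
    case True then show ?thesis by simp
  next
    case False
    then have "m \<le> k" using Suc.prems by simp
    then have "x k \<le> (1/2)^(k - m) * x m" by (rule Suc.IH)
    then have "x (Suc k) \<le> (1/2)^(k - m) * x m / 2" using st[of k] by simp
    also have "\<dots> = (1/2)^(Suc k - m) * x m" using \<open>m \<le> k\<close> by (simp add: Suc_diff_le)
    finally show ?thesis .
  qed
qed

lemma decay_down:
  fixes x :: "nat \<Rightarrow> real"
  assumes st: "\<And>k. x k \<le> x (Suc k) / 2" and km: "k < m"
  shows "x k \<le> (1/2)^(m - 1 - k) * x (m - 1)"
proof -
  have "x (m - 1 - d) \<le> (1/2)^d * x (m - 1)" if "d \<le> m - 1" for d
    using that
  proof (induction d)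
    case 0 then show ?case by simp
  next
    case (Suc d)
    then have "x (m - 1 - d) \<le> (1/2)^d * x (m - 1)" by simp
    moreover have "Suc (m - 1 - Suc d) = m - 1 - d" using Suc.prems by simp
    then have "x (m - 1 - Suc d) \<le> x (m - 1 - d) / 2" using st[of "m - 1 - Suc d"] by simp
    ultimately show ?case by simp
  qed
  from this[of "m - 1 - k"] show ?thesis using km by simp
qed

lemma geo_sum:
  fixes a :: "nat \<Rightarrow> ennreal" and B :: real
  assumes B: "0 \<le> B"
    and up: "\<And>k. m \<le> k \<Longrightarrow> a k \<le> ennreal (B * (1/2)^(k - m))"
    and down: "\<And>k. k < m \<Longrightarrow> a k \<le> ennreal (B * (1/2)^(m - 1 - k))"
  shows "(\<Sum>k. a k) \<le> ennreal (4 * B)"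
proof -
  define b1 where "b1 k = (if m \<le> k then ennreal (B * (1/2)^(k - m)) else 0)" for k
  define b2 where "b2 k = (if k < m then ennreal (B * (1/2)^(m - 1 - k)) else 0)" for k
  have "(\<Sum>k. a k) \<le> (\<Sum>k. b1 k + b2 k)"
    using down by (intro suminf_le) (auto simp: b1_def b2_def up)
  also have "\<dots> = (\<Sum>k. b1 k) + (\<Sum>k. b2 k)" by (rule suminf_add[symmetric]) auto
  also have "(\<Sum>k. b1 k) = ennreal (2 * B)"
  proof -
    define g where "g k = (if m \<le> k then B * (1/2::real)^(k - m) else 0)" for k
    have "(\<lambda>i. g (i + m)) = (\<lambda>i. B * (1/2)^i)" by (simp add: g_def)
    moreover have "(\<lambda>i. B * (1/2::real)^i) sums (B * (1 / (1 - 1/2)))"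
      by (intro sums_mult geometric_sums) simp
    ultimately have "(\<lambda>i. g (i + m)) sums (2 * B)" by (simp add: mult.commute)
    then have "g sums (2 * B + (\<Sum>i<m. g i))" by (simp add: sums_iff_shift)
    moreover have "(\<Sum>i<m. g i) = 0" by (auto simp: g_def)
    ultimately have gs: "g sums (2 * B)" by simp
    have "b1 = (\<lambda>k. ennreal (g k))" by (auto simp: b1_def g_def fun_eq_iff)
    moreover have "(\<lambda>k. ennreal (g k)) sums ennreal (2 * B)"
      using gs B by (subst sums_ennreal) (auto simp: g_def)
    ultimately show ?thesis by (simp add: sums_iff)
  qed
  also have "(\<Sum>k. b2 k) \<le> ennreal (2 * B)"
  proof -
    have "(\<Sum>k. b2 k) = (\<Sum>k<m. b2 k)" by (rule suminf_finite) (auto simp: b2_def)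
    also have "\<dots> = (\<Sum>k<m. ennreal (B * (1/2)^(m - 1 - k)))" by (rule sum.cong) (auto simp: b2_def)
    also have "\<dots> = ennreal (\<Sum>k<m. B * (1/2)^(m - 1 - k))" using B by simp
    also have "(\<Sum>k<m. B * (1/2::real)^(m - 1 - k)) = (\<Sum>k<m. B * (1/2)^k)"
    proof -
      have "(\<Sum>k<m. B * (1/2::real)^(m - 1 - k)) = (\<Sum>k<m. B * (1/2)^(m - Suc k))" by simp
      also have "\<dots> = (\<Sum>k<m. B * (1/2)^k)" by (rule sum.nat_diff_reindex)
      finally show ?thesis .
    qed
    also have "(\<Sum>k<m. B * (1/2::real)^k) \<le> (\<Sum>k. B * (1/2)^k)"
      by (rule sum_le_suminf) (auto simp: B intro!: summable_mult summable_geometric)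
    also have "(\<Sum>k. B * (1/2::real)^k) = 2 * B"
      by (subst suminf_mult) (auto simp: suminf_geometric intro: summable_geometric)
    finally show ?thesis by (simp add: ennreal_leI)
  qed
  finally show ?thesis using B by (simp add: ennreal_plus[symmetric] del: ennreal_plus)
qed



context psi_ctx
begin

lemma liminf0_small:
  assumes L: "\<not> (1 < Liminf (at_right 0) (\<lambda>t. ereal (\<psi> (2*t) / \<psi> t)))"
    and e: "0 < \<epsilon>" and d: "0 < \<delta>"
  shows "\<exists>t. 0 < t \<and> t < \<delta> \<and> \<psi> (2*t) / \<psi> t < 1 + \<epsilon>"
proof (rule ccontr)
  assume "\<not> ?thesis"
  then have H: "\<And>t. 0 < t \<Longrightarrow> t < \<delta> \<Longrightarrow> 1 + \<epsilon> \<le> \<psi> (2*t) / \<psi> t" by (meson not_less)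
  have "ereal (1 + \<epsilon>) \<le> Liminf (at_right 0) (\<lambda>t. ereal (\<psi> (2*t) / \<psi> t))"
    unfolding le_Liminf_iff
  proof (intro allI impI)
    fix y assume y: "y < ereal (1 + \<epsilon>)"
    have "eventually (\<lambda>t. 0 < t \<and> t < \<delta>) (at_right (0::real))"
      unfolding eventually_at_right_field using d by auto
    then show "eventually (\<lambda>t. y < ereal (\<psi> (2*t) / \<psi> t)) (at_right 0)"
    proof (rule eventually_mono)
      fix t assume "0 < t \<and> t < \<delta>"
      then have "ereal (1 + \<epsilon>) \<le> ereal (\<psi> (2*t) / \<psi> t)" using H by simp
      then show "y < ereal (\<psi> (2*t) / \<psi> t)" using y by (rule less_le_trans[rotated])
    qed
  qed
  moreover have "1 < ereal (1 + \<epsilon>)" using e by simp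
  ultimately show False using L by (meson less_le_trans)
qed

lemma liminfinf_large:
  assumes L: "\<not> (1 < Liminf at_top (\<lambda>t. ereal (\<psi> (2*t) / \<psi> t)))"
    and e: "0 < \<epsilon>"
  shows "\<exists>t. M < t \<and> \<psi> (2*t) / \<psi> t < 1 + \<epsilon>"
proof (rule ccontr)
  assume "\<not> ?thesis"
  then have H: "\<And>t. M < t \<Longrightarrow> 1 + \<epsilon> \<le> \<psi> (2*t) / \<psi> t" by (meson not_less)
  have "ereal (1 + \<epsilon>) \<le> Liminf at_top (\<lambda>t. ereal (\<psi> (2*t) / \<psi> t))"
    unfolding le_Liminf_iff
  proof (intro allI impI)
    fix y assume y: "y < ereal (1 + \<epsilon>)"
    have "eventually (\<lambda>t. M < t) at_top" by (rule eventually_gt_at_top)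
    then show "eventually (\<lambda>t. y < ereal (\<psi> (2*t) / \<psi> t)) at_top"
    proof (rule eventually_mono)
      fix t assume "M < t"
      then have "ereal (1 + \<epsilon>) \<le> ereal (\<psi> (2*t) / \<psi> t)" using H by simp
      then show "y < ereal (\<psi> (2*t) / \<psi> t)" using y by (rule less_le_trans[rotated])
    qed
  qed
  moreover have "1 < ereal (1 + \<epsilon>)" using e by simp
  ultimately show False using L by (meson less_le_trans)
qed

lemma step_bound:
  assumes t: "0 < t" "t \<in> ivl \<gamma>" and K: "2 \<le> K" and Kt: "real K * t \<in> ivl \<gamma>"
    and r: "\<psi> (2*t) / \<psi> t < 1 + 1 / real K"
  shows "\<psi> (real K * t) \<le> 2 * \<psi> t"
proof -
  have p: "0 < \<psi> t" by (rule psi_pos[OF t(2)])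
  have KD: "real K * t \<in> Dom" using Kt by (auto simp: ivl_def)
  have Kr: "2 \<le> real K" using K by simp
  have "\<psi> (2*t) < (1 + 1 / real K) * \<psi> t" using r p by (simp add: divide_less_eq)
  then have d: "\<psi> (2*t) - \<psi> t \<le> \<psi> t / real K" by (simp add: field_simps)
  have "\<psi> (real K * t) \<le> \<psi> t + (real K - 1) * (\<psi> (2 * t) - \<psi> t)"
    by (rule psi_K[OF t(1) Kr KD])
  also have "\<dots> \<le> \<psi> t + (real K - 1) * (\<psi> t / real K)"
    using d Kr by (intro add_left_mono mult_left_mono) auto
  also have "\<dots> \<le> 2 * \<psi> t"
  proof -
    have "(real K - 1) * (\<psi> t / real K) \<le> real K * (\<psi> t / real K)"
      using p Kr by (intro mult_right_mono) auto
    also have "\<dots> = \<psi> t" using Kr by simp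
    finally show ?thesis by simp
  qed
  finally show ?thesis .
qed

lemma sel0_ex:
  assumes L: "\<not> (1 < Liminf (at_right 0) (\<lambda>t. ereal (\<psi> (2*t) / \<psi> t)))"
    and K: "2 \<le> K" and p: "p \<in> ivl \<gamma>"
  shows "\<exists>t. 0 < t \<and> real K * t \<le> p \<and> \<psi> (real K * t) \<le> 2 * \<psi> t"
proof -
  have p0: "0 < p" using p by (simp add: ivl_def)
  have Kr: "2 \<le> real K" using K by simp
  obtain t where t: "0 < t" "t < p / real K" "\<psi> (2*t) / \<psi> t < 1 + 1 / real K"
    using liminf0_small[OF L, of "1 / real K" "p / real K"] p0 Kr by auto
  have Ktp: "real K * t < p" using t(2) Kr by (simp add: field_simps)
  have "t \<le> real K * t" using t(1) Kr by simp
  then have tp: "t \<le> p" using Ktp by simp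
  have ti: "t \<in> ivl \<gamma>" by (rule ivl_le[OF p t(1) tp])
  have Kti: "real K * t \<in> ivl \<gamma>" using ivl_le[OF p _ ] Ktp t(1) Kr by simp
  show ?thesis using step_bound[OF t(1) ti K Kti t(3)] t(1) Ktp by (intro exI[of _ t]) auto
qed

lemma selI_ex:
  assumes gi: "\<gamma> = \<infinity>" and L: "\<not> (1 < Liminf at_top (\<lambda>t. ereal (\<psi> (2*t) / \<psi> t)))"
    and K: "2 \<le> K"
  shows "\<exists>t. p \<le> t \<and> 0 < t \<and> \<psi> (real K * t) \<le> 2 * \<psi> t"
proof -
  have Kr: "2 \<le> real K" using K by simp
  obtain t where t: "max p 0 < t" "\<psi> (2*t) / \<psi> t < 1 + 1 / real K"
    using liminfinf_large[OF L, of "1 / real K" "max p 0"] Kr by auto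
  have ivl_all: "s \<in> ivl \<gamma>" if "0 < s" for s using that gi by (simp add: ivl_def)
  have t0: "0 < t" using t(1) by simp
  have "\<psi> (real K * t) \<le> 2 * \<psi> t"
    by (rule step_bound[OF t0 ivl_all[OF t0] K ivl_all t(2)]) (use t0 Kr in simp)
  then show ?thesis using t by (intro exI[of _ t]) auto
qed

end



context psi_ctx
begin

lemma ivl_nonempty: "\<exists>b. b \<in> ivl \<gamma>"
proof (cases \<gamma>)
  case (real r)
  then have "0 < r" using g0 by simp
  then have "r / 2 \<in> ivl \<gamma>" using real by (simp add: ivl_def)
  then show ?thesis by blast
next
  case PInf then show ?thesis by (intro exI[of _ 1]) (simp add: ivl_def)
next
  case MInf then show ?thesis using g0 by simp
qed

lemma singular0:
  assumes L: "\<not> (1 < Liminf (at_right 0) (\<lambda>t. ereal (\<psi> (2*t) / \<psi> t)))"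
    and hz: "\<And>y. 0 < y \<Longrightarrow> \<exists>s\<in>ivl \<gamma>. \<psi> s < y"
  shows "\<not> dual_order_continuous \<gamma> \<psi>"
proof -
  obtain b where b: "b \<in> ivl \<gamma>" using ivl_nonempty by blast
  define sel where "sel K p = (SOME t. 0 < t \<and> real K * t \<le> p \<and> \<psi> (real K * t) \<le> 2 * \<psi> t)" for K :: nat and p
  have sel: "0 < sel K p \<and> real K * sel K p \<le> p \<and> \<psi> (real K * sel K p) \<le> 2 * \<psi> (sel K p)"
    if "p \<in> ivl \<gamma>" "2 \<le> K" for K p
    unfolding sel_def by (rule someI_ex[OF sel0_ex[OF L that(2) that(1)]])
  define sm where "sm y = (SOME s. s \<in> ivl \<gamma> \<and> \<psi> s < y)" for y
  have sm: "sm y \<in> ivl \<gamma> \<and> \<psi> (sm y) < y" if "0 < y" for y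
    unfolding sm_def by (rule someI_ex[OF hz[OF that, unfolded Bex_def]])
  define K :: "nat \<Rightarrow> nat" where "K k = k + 8" for k
  define t where "t = rec_nat (sel 8 b) (\<lambda>k tk. sel (k + 9) (min tk (sm (\<psi> (real (k + 8) * tk) / 2))))"
  have t0: "t 0 = sel 8 b" by (simp add: t_def)
  have tS: "t (Suc k) = sel (k + 9) (min (t k) (sm (\<psi> (real (K k) * t k) / 2)))" for k
    by (simp add: t_def K_def)
  define uu where "uu k = real (K k) * t k" for k
  have inv: "0 < t k \<and> uu k \<in> ivl \<gamma> \<and> \<psi> (uu k) \<le> 2 * \<psi> (t k)" for k
  proof (induction k)
    case 0
    have s: "0 < t 0 \<and> 8 * t 0 \<le> b \<and> \<psi> (8 * t 0) \<le> 2 * \<psi> (t 0)"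
      using sel[OF b, of 8] by (simp add: t0)
    then have "uu 0 \<in> ivl \<gamma>" using ivl_le[OF b] by (simp add: uu_def K_def)
    then show ?case using s by (simp add: uu_def K_def)
  next
    case (Suc k)
    have pu: "0 < \<psi> (uu k)" using psi_pos Suc by blast
    have s: "sm (\<psi> (uu k) / 2) \<in> ivl \<gamma>" using sm[of "\<psi> (uu k) / 2"] pu by simp
    have tki: "t k \<in> ivl \<gamma>" using Suc ivl_le[of "uu k" "t k"] by (simp add: uu_def K_def)
    define p where "p = min (t k) (sm (\<psi> (uu k) / 2))"
    have pi: "p \<in> ivl \<gamma>" using tki s by (simp add: p_def min_def)
    have sp: "0 < sel (k + 9) p \<and> real (k + 9) * sel (k + 9) p \<le> p \<and> \<psi> (real (k + 9) * sel (k + 9) p) \<le> 2 * \<psi> (sel (k + 9) p)"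
      by (rule sel[OF pi]) simp
    have tSk: "t (Suc k) = sel (k + 9) p" using tS[of k] by (simp add: p_def uu_def)
    have ue: "uu (Suc k) = real (k + 9) * sel (k + 9) p" by (simp add: uu_def K_def tSk)
    have "0 < real (k + 9) * sel (k + 9) p" using sp by simp
    then have "uu (Suc k) \<in> ivl \<gamma>" using ivl_le[OF pi] sp ue by simp
    moreover have "0 < t (Suc k)" using sp tSk by simp
    moreover have "\<psi> (uu (Suc k)) \<le> 2 * \<psi> (t (Suc k))" unfolding ue tSk using sp by blast
    ultimately show ?case by blast
  qed
  have tpos: "0 < t k" for k using inv by blast
  have ui: "uu k \<in> ivl \<gamma>" for k using inv by blast
  have S2: "\<psi> (uu k) \<le> 2 * \<psi> (t k)" for k using inv by blast
  have tu: "t k \<le> uu k" for k using tpos[of k] by (simp add: uu_def K_def)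
  have ti: "t k \<in> ivl \<gamma>" for k using ivl_le[OF ui tpos tu] .
  have pu: "0 < \<psi> (uu k)" for k using psi_pos[OF ui] .
  have step: "uu (Suc k) \<le> t k \<and> \<psi> (uu (Suc k)) \<le> \<psi> (uu k) / 2" for k
  proof -
    have s: "sm (\<psi> (uu k) / 2) \<in> ivl \<gamma> \<and> \<psi> (sm (\<psi> (uu k) / 2)) < \<psi> (uu k) / 2"
      using sm[of "\<psi> (uu k) / 2"] pu[of k] by simp
    define p where "p = min (t k) (sm (\<psi> (uu k) / 2))"
    have pi: "p \<in> ivl \<gamma>" using ti[of k] s by (simp add: p_def min_def)
    have sp: "real (k + 9) * sel (k + 9) p \<le> p"
      using sel[OF pi, of "k + 9"] by simp
    have tSk: "t (Suc k) = sel (k + 9) p" using tS[of k] by (simp add: p_def uu_def)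
    have up: "uu (Suc k) \<le> p" using sp by (simp add: uu_def K_def tSk add.commute)
    have "\<psi> (uu (Suc k)) \<le> \<psi> (sm (\<psi> (uu k) / 2))"
      using up ui[of "Suc k"] s by (intro psi_mono) (auto simp: ivl_def p_def)
    then show ?thesis using up s by (simp add: p_def)
  qed
  have dj0: "uu (Suc k + d) \<le> t k" for k d
  proof (induction d)
    case 0 then show ?case using step[of k] by simp
  next
    case (Suc d)
    have "uu (Suc k + Suc d) \<le> t (Suc k + d)" using step[of "Suc k + d"] by simp
    also have "\<dots> \<le> uu (Suc k + d)" by (rule tu)
    finally show ?case using Suc by simp
  qed
  have dj: "{t k<..<real (K k) * t k} \<inter> {t k'<..<real (K k') * t k'} = {}" if "k \<noteq> k'" for k k'
  proof -
    have *: "{t k<..<uu k} \<inter> {t k'<..<uu k'} = {}" if "k < k'" for k k'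
    proof -
      obtain d where d: "k' = Suc k + d" using \<open>k < k'\<close> less_iff_Suc_add by auto
      have "uu k' \<le> t k" using dj0[of k d] d by simp
      then show ?thesis by auto
    qed
    show ?thesis using that *[of k k'] *[of k' k] by (cases "k < k'") (auto simp: uu_def)
  qed
  have tdec: "t (Suc k) \<le> t k / 8" for k
  proof -
    have "real (K (Suc k)) * t (Suc k) \<le> t k" using step[of k] by (simp add: uu_def)
    moreover have "8 * t (Suc k) \<le> real (K (Suc k)) * t (Suc k)" using tpos[of "Suc k"] by (simp add: K_def)
    ultimately show ?thesis by simp
  qed
  have tpow: "t k \<le> (1/8)^k * t 0" for k
  proof (induction k)
    case (Suc k) then show ?case using tdec[of k] by simp
  qed simp
  show ?thesis
  proof (rule singular_case[of t K])
    show "\<And>k. 0 < t k" by (rule tpos)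
    show "\<And>k. k + 8 \<le> K k" by (simp add: K_def)
    show "\<And>k. real (K k) * t k \<in> ivl \<gamma>" using ui by (simp add: uu_def)
    show "\<And>k k'. k \<noteq> k' \<Longrightarrow> {t k<..<real (K k) * t k} \<inter> {t k'<..<real (K k') * t k'} = {}" by (rule dj)
  next
    fix \<tau> assume tau: "\<tau> \<in> ivl \<gamma>"
    have tau0: "0 < \<tau>" using tau by (simp add: ivl_def)
    have ex: "\<exists>k. t k \<le> \<tau>"
    proof -
      obtain n where n: "(1/8::real)^n < \<tau> / t 0" using real_arch_pow_inv[of "\<tau> / t 0" "1/8"] tau0 tpos[of 0] by auto
      then have "(1/8)^n * t 0 < \<tau>" using tpos[of 0] by (simp add: field_simps)
      then show ?thesis using tpow[of n] by (intro exI[of _ n]) simp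
    qed
    define m where "m = (LEAST k. t k \<le> \<tau>)"
    have tm: "t m \<le> \<tau>" unfolding m_def by (rule LeastI_ex[OF ex])
    have ltm: "\<tau> < t k" if "k < m" for k using not_less_Least[OF that[unfolded m_def]] by simp
    have xdec: "\<psi> (uu k) \<le> (1/2)^(k - m) * \<psi> (uu m)" if "m \<le> k" for k
      by (rule decay_up[of "\<lambda>k. \<psi> (uu k)", OF _ that]) (use step in auto)
    have ystep: "\<psi> (uu k) / t k \<le> (\<psi> (uu (Suc k)) / t (Suc k)) / 2" for k
    proof -
      have a0: "0 < t (Suc k)" by (rule tpos)
      have A: "uu (Suc k) = real (k + 9) * t (Suc k)" by (simp add: uu_def K_def)
      have "\<psi> (uu k) / t k \<le> 2 * \<psi> (t k) / t k" using S2[of k] tpos[of k] by (simp add: divide_right_mono)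
      also have "\<psi> (t k) / t k \<le> \<psi> (uu (Suc k)) / uu (Suc k)"
      proof -
        have "uu (Suc k) / t k * \<psi> (t k) \<le> \<psi> (uu (Suc k))"
          using ratio[of "t k" "uu (Suc k)"] ti[of k] ui[of "Suc k"] step[of k] by (auto simp: ivl_def)
        then show ?thesis using tpos[of k] ui[of "Suc k"] by (simp add: field_simps ivl_def)
      qed
      then have "2 * \<psi> (t k) / t k \<le> 2 * (\<psi> (uu (Suc k)) / uu (Suc k))" by simp
      also have "\<dots> = 2 * \<psi> (uu (Suc k)) / (real (k + 9) * t (Suc k))" by (simp add: A)
      also have "\<dots> \<le> (\<psi> (uu (Suc k)) / t (Suc k)) / 2"
      proof -
        have "2 * \<psi> (uu (Suc k)) / (real (k + 9) * t (Suc k)) = (\<psi> (uu (Suc k)) / t (Suc k)) * (2 / real (k + 9))"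
          by (simp add: field_simps)
        also have "\<dots> \<le> (\<psi> (uu (Suc k)) / t (Suc k)) * (1 / 2)"
          using pu[of "Suc k"] a0 by (intro mult_left_mono) (auto simp: field_simps)
        finally show ?thesis by simp
      qed
      finally show ?thesis .
    qed
    have ydec: "\<psi> (uu k) / t k \<le> (1/2)^(m - 1 - k) * (\<psi> (uu (m - 1)) / t (m - 1))" if "k < m" for k
      by (rule decay_down[of "\<lambda>k. \<psi> (uu k) / t k", OF _ that]) (rule ystep)
    have psit: "0 \<le> \<psi> \<tau>" using psi_pos[OF tau] by simp
    have "(\<Sum>k. ennreal (\<psi> (real (K k) * t k) * min 1 (\<tau> / t k))) \<le> ennreal (4 * (2 * \<psi> \<tau>))"
    proof (rule geo_sum[where m=m])
      show "0 \<le> 2 * \<psi> \<tau>" using psit by simp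
    next
      fix k assume km: "m \<le> k"
      have "\<psi> (uu k) * min 1 (\<tau> / t k) \<le> \<psi> (uu k)"
        using pu[of k] tau0 tpos[of k] by (intro mult_left_le) auto
      also have "\<dots> \<le> (1/2)^(k - m) * \<psi> (uu m)" by (rule xdec[OF km])
      also have "\<dots> \<le> (1/2)^(k - m) * (2 * \<psi> \<tau>)"
      proof (rule mult_left_mono)
        have "\<psi> (t m) \<le> \<psi> \<tau>" using tm ti[of m] tau by (intro psi_mono) (auto simp: ivl_def)
        then show "\<psi> (uu m) \<le> 2 * \<psi> \<tau>" using S2[of m] by simp
      qed simp
      finally show "ennreal (\<psi> (real (K k) * t k) * min 1 (\<tau> / t k)) \<le> ennreal (2 * \<psi> \<tau> * (1/2)^(k - m))"
        by (intro ennreal_leI) (simp add: uu_def mult.commute)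
    next
      fix k assume km: "k < m"
      have tk: "\<tau> < t k" by (rule ltm[OF km])
      have m1: "m - 1 < m" "\<tau> < t (m - 1)" using km ltm[of "m - 1"] by auto
      have "\<psi> (uu k) * min 1 (\<tau> / t k) = \<psi> (uu k) / t k * \<tau>" using tk tpos[of k] by (simp add: min_def)
      also have "\<dots> \<le> (1/2)^(m - 1 - k) * (\<psi> (uu (m - 1)) / t (m - 1)) * \<tau>"
        using ydec[OF km] tau0 by (intro mult_right_mono) auto
      also have "\<dots> \<le> (1/2)^(m - 1 - k) * (2 * \<psi> \<tau>)"
      proof -
        have "\<psi> (uu (m - 1)) / t (m - 1) * \<tau> \<le> 2 * (\<tau> / t (m - 1) * \<psi> (t (m - 1)))"
          using S2[of "m - 1"] tpos[of "m - 1"] tau0 by (simp add: field_simps)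
        also have "\<dots> \<le> 2 * \<psi> \<tau>"
          using ratio[of "t (m - 1)" \<tau>] ti[of "m - 1"] tau0 m1(2) by (auto simp: ivl_def)
        finally have X: "\<psi> (uu (m - 1)) / t (m - 1) * \<tau> \<le> 2 * \<psi> \<tau>" .
        have "(1/2)^(m - 1 - k) * (\<psi> (uu (m - 1)) / t (m - 1) * \<tau>) \<le> (1/2)^(m - 1 - k) * (2 * \<psi> \<tau>)"
          by (rule mult_left_mono[OF X]) simp
        then show ?thesis by (simp only: mult.assoc)
      qed
      finally show "ennreal (\<psi> (real (K k) * t k) * min 1 (\<tau> / t k)) \<le> ennreal (2 * \<psi> \<tau> * (1/2)^(m - 1 - k))"
        by (intro ennreal_leI) (simp add: uu_def mult.commute)
    qed
    then show "(\<Sum>k. ennreal (\<psi> (real (K k) * t k) * min 1 (\<tau> / t k))) \<le> ennreal (8 * \<psi> \<tau>)" by simp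
  qed
qed

end



context psi_ctx
begin

lemma singularInf:
  assumes gi: "\<gamma> = \<infinity>" and L: "\<not> (1 < Liminf at_top (\<lambda>t. ereal (\<psi> (2*t) / \<psi> t)))"
    and hu: "\<And>B. \<exists>s. 0 \<le> s \<and> B < \<psi> s"
  shows "\<not> dual_order_continuous \<gamma> \<psi>"
proof -
  have ivl_all: "s \<in> ivl \<gamma> \<longleftrightarrow> 0 < s" for s by (simp add: ivl_def gi)
  define sel where "sel K p = (SOME t. p \<le> t \<and> 0 < t \<and> \<psi> (real K * t) \<le> 2 * \<psi> t)" for K :: nat and p
  have sel: "p \<le> sel K p \<and> 0 < sel K p \<and> \<psi> (real K * sel K p) \<le> 2 * \<psi> (sel K p)" if "2 \<le> K" for K p
    unfolding sel_def by (rule someI_ex[OF selI_ex[OF gi L that]])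
  define bg where "bg y = (SOME s. 0 \<le> s \<and> y < \<psi> s)" for y
  have bg: "0 \<le> bg y \<and> y < \<psi> (bg y)" for y unfolding bg_def by (rule someI_ex[OF hu])
  define K :: "nat \<Rightarrow> nat" where "K k = k + 8" for k
  define t where "t = rec_nat (sel 8 1) (\<lambda>k tk. sel (k + 9) (max (real (k + 8) * tk) (bg (2 * \<psi> (real (k + 8) * tk)))))"
  define uu where "uu k = real (K k) * t k" for k
  have t0: "t 0 = sel 8 1" by (simp add: t_def)
  have tS: "t (Suc k) = sel (k + 9) (max (uu k) (bg (2 * \<psi> (uu k))))" for k
    by (simp add: t_def K_def uu_def)
  have inv: "0 < t k \<and> \<psi> (uu k) \<le> 2 * \<psi> (t k)" for k
  proof (cases k)
    case 0
    have "0 < sel 8 1 \<and> \<psi> (real 8 * sel 8 1) \<le> 2 * \<psi> (sel 8 1)" using sel[of 8 1] by simp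
    then show ?thesis using 0 by (simp add: t0 uu_def K_def)
  next
    case (Suc j)
    define p where "p = max (uu j) (bg (2 * \<psi> (uu j)))"
    have sp: "p \<le> sel (j + 9) p \<and> 0 < sel (j + 9) p \<and> \<psi> (real (j + 9) * sel (j + 9) p) \<le> 2 * \<psi> (sel (j + 9) p)"
      by (rule sel) simp
    have tSj: "t (Suc j) = sel (j + 9) p" using tS[of j] by (simp add: p_def)
    have ue: "uu (Suc j) = real (j + 9) * sel (j + 9) p" by (simp add: uu_def K_def tSj)
    have "0 < t (Suc j)" using sp tSj by simp
    moreover have "\<psi> (uu (Suc j)) \<le> 2 * \<psi> (t (Suc j))" unfolding ue tSj using sp by blast
    ultimately show ?thesis using Suc by simp
  qed
  have tpos: "0 < t k" for k using inv by blast
  have S2: "\<psi> (uu k) \<le> 2 * \<psi> (t k)" for k using inv by blast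
  have upos: "0 < uu k" for k using tpos[of k] by (simp add: uu_def K_def)
  have ui: "uu k \<in> ivl \<gamma>" for k using upos ivl_all by simp
  have ti: "t k \<in> ivl \<gamma>" for k using tpos ivl_all by simp
  have tu: "t k \<le> uu k" for k using tpos[of k] by (simp add: uu_def K_def)
  have pu: "0 < \<psi> (uu k)" for k using psi_pos[OF ui] .
  have Dall: "s \<in> Dom" if "0 \<le> s" for s using that gi by simp
  have step: "uu k \<le> t (Suc k) \<and> 2 * \<psi> (uu k) \<le> \<psi> (uu (Suc k))" for k
  proof -
    define p where "p = max (uu k) (bg (2 * \<psi> (uu k)))"
    have sp: "p \<le> sel (k + 9) p" by (rule sel[THEN conjunct1]) simp
    have tSk: "t (Suc k) = sel (k + 9) p" using tS[of k] by (simp add: p_def)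
    have b: "0 \<le> bg (2 * \<psi> (uu k)) \<and> 2 * \<psi> (uu k) < \<psi> (bg (2 * \<psi> (uu k)))" by (rule bg)
    have "bg (2 * \<psi> (uu k)) \<le> t (Suc k)" using sp tSk by (simp add: p_def)
    then have "\<psi> (bg (2 * \<psi> (uu k))) \<le> \<psi> (t (Suc k))" using b tpos[of "Suc k"]
      by (intro psi_mono Dall) auto
    also have "\<dots> \<le> \<psi> (uu (Suc k))" using tu[of "Suc k"] tpos[of "Suc k"] by (intro psi_mono Dall) auto
    finally have "2 * \<psi> (uu k) \<le> \<psi> (uu (Suc k))" using b by simp
    moreover have "uu k \<le> t (Suc k)" using sp tSk by (simp add: p_def)
    ultimately show ?thesis by simp
  qed
  have dj0: "uu k \<le> t (Suc k + d)" for k d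
  proof (induction d)
    case 0 then show ?case using step[of k] by simp
  next
    case (Suc d)
    have "uu k \<le> t (Suc k + d)" by (rule Suc.IH)
    also have "\<dots> \<le> uu (Suc k + d)" by (rule tu)
    also have "\<dots> \<le> t (Suc k + Suc d)" using step[of "Suc k + d"] by simp
    finally show ?case .
  qed
  have dj: "{t k<..<real (K k) * t k} \<inter> {t k'<..<real (K k') * t k'} = {}" if "k \<noteq> k'" for k k'
  proof -
    have *: "{t k<..<uu k} \<inter> {t k'<..<uu k'} = {}" if "k < k'" for k k'
    proof -
      obtain d where d: "k' = Suc k + d" using \<open>k < k'\<close> less_iff_Suc_add by auto
      have "uu k \<le> t k'" using dj0[of k d] d by simp
      then show ?thesis by auto
    qed
    show ?thesis using that *[of k k'] *[of k' k] by (cases "k < k'") (auto simp: uu_def)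
  qed
  have tinc: "8 * t k \<le> t (Suc k)" for k
  proof -
    have "8 * t k \<le> uu k" using tpos[of k] by (simp add: uu_def K_def)
    then show ?thesis using step[of k] by simp
  qed
  have tpow: "8^k * t 0 \<le> t k" for k
  proof (induction k)
    case (Suc k) then show ?case using tinc[of k] by simp
  qed simp
  show ?thesis
  proof (rule singular_case[of t K])
    show "\<And>k. 0 < t k" by (rule tpos)
    show "\<And>k. k + 8 \<le> K k" by (simp add: K_def)
    show "\<And>k. real (K k) * t k \<in> ivl \<gamma>" using ui by (simp add: uu_def)
    show "\<And>k k'. k \<noteq> k' \<Longrightarrow> {t k<..<real (K k) * t k} \<inter> {t k'<..<real (K k') * t k'} = {}" by (rule dj)
  next
    fix \<tau> assume tau: "\<tau> \<in> ivl \<gamma>"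
    have tau0: "0 < \<tau>" using tau by (simp add: ivl_def)
    have ex: "\<exists>k. \<tau> < t k"
    proof -
      obtain n where n: "\<tau> / t 0 < (8::real)^n" using real_arch_pow[of 8 "\<tau> / t 0"] by auto
      then have "\<tau> < 8^n * t 0" using tpos[of 0] by (simp add: field_simps)
      then show ?thesis using tpow[of n] by (intro exI[of _ n]) simp
    qed
    define m where "m = (LEAST k. \<tau> < t k)"
    have tm: "\<tau> < t m" unfolding m_def by (rule LeastI_ex[OF ex])
    have ltm: "t k \<le> \<tau>" if "k < m" for k using not_less_Least[OF that[unfolded m_def]] by simp
    have xdec: "\<psi> (uu k) \<le> (1/2)^(m - 1 - k) * \<psi> (uu (m - 1))" if "k < m" for k
      by (rule decay_down[of "\<lambda>k. \<psi> (uu k)", OF _ that]) (use step in \<open>auto simp: mult.commute\<close>)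
    have ystep: "\<psi> (uu (Suc k)) / t (Suc k) \<le> (\<psi> (uu k) / t k) / 2" for k
    proof -
      have "\<psi> (uu (Suc k)) / t (Suc k) \<le> 2 * \<psi> (t (Suc k)) / t (Suc k)"
        using S2[of "Suc k"] tpos[of "Suc k"] by (simp add: divide_right_mono)
      also have "\<psi> (t (Suc k)) / t (Suc k) \<le> \<psi> (uu k) / uu k"
      proof -
        have "uu k / t (Suc k) * \<psi> (t (Suc k)) \<le> \<psi> (uu k)"
          using ratio[of "t (Suc k)" "uu k"] upos[of k] step[of k] tpos[of "Suc k"] Dall by auto
        then show ?thesis using tpos[of "Suc k"] upos[of k] by (simp add: field_simps)
      qed
      then have "2 * \<psi> (t (Suc k)) / t (Suc k) \<le> 2 * (\<psi> (uu k) / uu k)" by simp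
      also have "\<dots> = (\<psi> (uu k) / t k) * (2 / real (k + 8))"
        using tpos[of k] by (simp add: uu_def K_def field_simps)
      also have "\<dots> \<le> (\<psi> (uu k) / t k) * (1 / 2)"
        using pu[of k] tpos[of k] by (intro mult_left_mono) (auto simp: field_simps)
      finally show ?thesis by simp
    qed
    have ydec: "\<psi> (uu k) / t k \<le> (1/2)^(k - m) * (\<psi> (uu m) / t m)" if "m \<le> k" for k
      by (rule decay_up[of "\<lambda>k. \<psi> (uu k) / t k", OF _ that]) (rule ystep)
    have psit: "0 \<le> \<psi> \<tau>" using psi_pos[OF tau] by simp
    have "(\<Sum>k. ennreal (\<psi> (real (K k) * t k) * min 1 (\<tau> / t k))) \<le> ennreal (4 * (2 * \<psi> \<tau>))"
    proof (rule geo_sum[where m=m])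
      show "0 \<le> 2 * \<psi> \<tau>" using psit by simp
    next
      fix k assume km: "m \<le> k"
      have tk: "\<tau> < t k"
      proof -
        have "t m \<le> t k" using km
        proof (induction k)
          case (Suc k)
          show ?case
          proof (cases "m = Suc k")
            case False
            then have "t m \<le> t k" using Suc by simp
            then show ?thesis using tinc[of k] tpos[of k] by simp
          qed simp
        qed simp
        then show ?thesis using tm by simp
      qed
      have "\<psi> (uu k) * min 1 (\<tau> / t k) = \<psi> (uu k) / t k * \<tau>" using tk tpos[of k] by (simp add: min_def)
      also have "\<dots> \<le> (1/2)^(k - m) * (\<psi> (uu m) / t m) * \<tau>"
        using ydec[OF km] tau0 by (intro mult_right_mono) auto
      also have "\<dots> \<le> (1/2)^(k - m) * (2 * \<psi> \<tau>)"
      proof -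
        have "\<psi> (uu m) / t m * \<tau> \<le> 2 * (\<tau> / t m * \<psi> (t m))"
          using S2[of m] tpos[of m] tau0 by (simp add: field_simps)
        also have "\<dots> \<le> 2 * \<psi> \<tau>"
          using ratio[of "t m" \<tau>] tpos[of m] tau0 tm Dall by auto
        finally have X: "\<psi> (uu m) / t m * \<tau> \<le> 2 * \<psi> \<tau>" .
        have "(1/2)^(k - m) * (\<psi> (uu m) / t m * \<tau>) \<le> (1/2)^(k - m) * (2 * \<psi> \<tau>)"
          by (rule mult_left_mono[OF X]) simp
        then show ?thesis by (simp only: mult.assoc)
      qed
      finally show "ennreal (\<psi> (real (K k) * t k) * min 1 (\<tau> / t k)) \<le> ennreal (2 * \<psi> \<tau> * (1/2)^(k - m))"
        by (intro ennreal_leI) (simp add: uu_def mult.commute)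
    next
      fix k assume km: "k < m"
      have "\<psi> (uu k) * min 1 (\<tau> / t k) \<le> \<psi> (uu k)"
        using pu[of k] tau0 tpos[of k] by (intro mult_left_le) auto
      also have "\<dots> \<le> (1/2)^(m - 1 - k) * \<psi> (uu (m - 1))" by (rule xdec[OF km])
      also have "\<dots> \<le> (1/2)^(m - 1 - k) * (2 * \<psi> \<tau>)"
      proof (rule mult_left_mono)
        have "t (m - 1) \<le> \<tau>" using ltm[of "m - 1"] km by simp
        then have "\<psi> (t (m - 1)) \<le> \<psi> \<tau>" using tpos[of "m - 1"] tau0 by (intro psi_mono Dall) auto
        then show "\<psi> (uu (m - 1)) \<le> 2 * \<psi> \<tau>" using S2[of "m - 1"] by simp
      qed simp
      finally show "ennreal (\<psi> (real (K k) * t k) * min 1 (\<tau> / t k)) \<le> ennreal (2 * \<psi> \<tau> * (1/2)^(m - 1 - k))"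
        by (intro ennreal_leI) (simp add: uu_def mult.commute)
    qed
    then show "(\<Sum>k. ennreal (\<psi> (real (K k) * t k) * min 1 (\<tau> / t k))) \<le> ennreal (8 * \<psi> \<tau>)" by simp
  qed
qed

lemma kernel0:
  assumes c: "0 < c" "\<And>s. s \<in> ivl \<gamma> \<Longrightarrow> c \<le> \<psi> s"
  shows "\<not> dual_order_continuous \<gamma> \<psi>"
proof -
  obtain b where b: "b \<in> ivl \<gamma>" using ivl_nonempty by blast
  have b0: "0 < b" using b by (simp add: ivl_def)
  define a where "a j = b / 2^(Suc j)" for j :: nat
  have apos: "0 < a j" for j using b0 by (simp add: a_def)
  have ae: "a j + a j = b / 2^j" for j by (simp add: a_def)
  have mono2: "b / 2^j \<le> b / 2^(Suc i)" if "i < j" for i j :: nat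
  proof -
    have "(2::real)^(Suc i) \<le> 2^j" using that by (intro power_increasing) auto
    then show ?thesis using b0 by (intro divide_left_mono) auto
  qed
  have ble: "b / 2^j \<le> b" for j :: nat
  proof -
    have "(1::real) \<le> 2^j" by simp
    then show ?thesis using b0 by (simp add: divide_le_eq)
  qed
  show ?thesis
  proof (rule kernel_case[where a=a and e=a and C="\<psi> b" and c=c])
    fix j show "a j \<in> ivl \<gamma>" using ivl_le[OF b apos] ble[of "Suc j"] by (simp add: a_def)
  next
    fix j show "0 \<le> a j" using apos[of j] by simp
  next
    fix i j :: nat assume ij: "i \<noteq> j"
    have *: "{a i<..<a i + a i} \<inter> {a j<..<a j + a j} = {}" if "i < j" for i j
      using mono2[OF that] by (auto simp: ae a_def)
    show "{a i<..<a i + a i} \<inter> {a j<..<a j + a j} = {}"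
      using *[of i j] *[of j i] ij by (cases "i < j") auto
  next
    fix N show "\<exists>b'\<in>ivl \<gamma>. \<psi> b' \<le> \<psi> b \<and> (\<forall>j<N. a j + a j \<le> b')"
      using b ble by (intro bexI[of _ b]) (auto simp: ae)
  next
    fix j show "c \<le> \<psi> (a j)" using c(2) ivl_le[OF b apos] ble[of "Suc j"] by (simp add: a_def)
  qed (rule c(1))
qed

lemma kernelInf:
  assumes gi: "\<gamma> = \<infinity>" and bd: "\<And>s. 0 \<le> s \<Longrightarrow> \<psi> s \<le> C"
  shows "\<not> dual_order_continuous \<gamma> \<psi>"
proof -
  have ivl_all: "s \<in> ivl \<gamma> \<longleftrightarrow> 0 < s" for s by (simp add: ivl_def gi)
  have Dall: "s \<in> Dom" if "0 \<le> s" for s using that gi by simp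
  define a where "a j = (2::real)^j" for j :: nat
  have apos: "0 < a j" for j by (simp add: a_def)
  have ae: "a j + a j = 2^(Suc j)" for j by (simp add: a_def)
  show ?thesis
  proof (rule kernel_case[where a=a and e=a and C=C and c="\<psi> 1"])
    fix j show "a j \<in> ivl \<gamma>" using apos ivl_all by simp
  next
    fix j show "0 \<le> a j" using apos[of j] by simp
  next
    fix i j :: nat assume ij: "i \<noteq> j"
    have *: "{a i<..<a i + a i} \<inter> {a j<..<a j + a j} = {}" if "i < j" for i j
    proof -
      have "(2::real)^(Suc i) \<le> 2^j" using that by (intro power_increasing) auto
      then show ?thesis by (auto simp: ae a_def)
    qed
    show "{a i<..<a i + a i} \<inter> {a j<..<a j + a j} = {}"
      using *[of i j] *[of j i] ij by (cases "i < j") auto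
  next
    fix N
    have "\<forall>j<N. a j + a j \<le> 2^N"
    proof (intro allI impI)
      fix j assume "j < N"
      then have "(2::real)^(Suc j) \<le> 2^N" by (intro power_increasing) auto
      then show "a j + a j \<le> 2^N" by (simp add: ae)
    qed
    then show "\<exists>b'\<in>ivl \<gamma>. \<psi> b' \<le> C \<and> (\<forall>j<N. a j + a j \<le> b')"
      using bd[of "2^N"] ivl_all by (intro bexI[of _ "2^N"]) auto
  next
    show "0 < \<psi> 1" using psi_pos ivl_all by simp
  next
    fix j
    have "(1::real) \<le> 2^j" by simp
    then show "\<psi> 1 \<le> \<psi> (a j)" by (intro psi_mono Dall) (auto simp: a_def)
  qed
qed

end



theorem proposition5p3:
  fixes \<gamma> :: ereal and \<psi> :: "real \<Rightarrow> real"
  assumes "0 < \<gamma>"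
    and "\<forall>t. 0 \<le> t \<and> ereal t < \<gamma> \<longrightarrow> 0 \<le> \<psi> t"
    and "\<exists>t. 0 \<le> t \<and> ereal t < \<gamma> \<and> \<psi> t \<noteq> 0"
    and "mono_on {t. 0 \<le> t \<and> ereal t < \<gamma>} \<psi>"
    and "concave_on {t. 0 \<le> t \<and> ereal t < \<gamma>} \<psi>"
    and "continuous_on (ivl \<gamma>) \<psi>"
    and "\<psi> 0 = 0"
    and "dual_order_continuous \<gamma> \<psi>"
  shows "condA \<gamma> \<psi> \<or> condB \<gamma> \<psi>"
proof (rule ccontr)
  assume nc: "\<not> (condA \<gamma> \<psi> \<or> condB \<gamma> \<psi>)"
  interpret psi_ctx \<gamma> \<psi>
    by (rule psi_ctx.intro) (use assms in auto)
  have cs: "\<not> (1 < Liminf (at_right 0) (\<lambda>t. ereal (\<psi> (2*t) / \<psi> t)))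
      \<or> (\<gamma> = \<infinity> \<and> \<not> (1 < Liminf at_top (\<lambda>t. ereal (\<psi> (2*t) / \<psi> t))))"
  proof (cases "\<gamma> < \<infinity>")
    case True then show ?thesis using nc by (auto simp: condB_def)
  next
    case False
    then have "\<gamma> = \<infinity>" by (cases \<gamma>) auto
    then show ?thesis using nc by (auto simp: condA_def)
  qed
  have "\<not> dual_order_continuous \<gamma> \<psi>"
  proof (cases "\<not> (1 < Liminf (at_right 0) (\<lambda>t. ereal (\<psi> (2*t) / \<psi> t)))")
    case True
    show ?thesis
    proof (cases "\<exists>c>0. \<forall>s\<in>ivl \<gamma>. c \<le> \<psi> s")
      case True
      then obtain c where "0 < c" "\<And>s. s \<in> ivl \<gamma> \<Longrightarrow> c \<le> \<psi> s" by blast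
      then show ?thesis by (rule kernel0)
    next
      case False
      then have "\<And>y. 0 < y \<Longrightarrow> \<exists>s\<in>ivl \<gamma>. \<psi> s < y" by (meson not_le)
      with \<open>\<not> (1 < Liminf (at_right 0) (\<lambda>t. ereal (\<psi> (2*t) / \<psi> t)))\<close> show ?thesis
        by (rule singular0)
    qed
  next
    case False
    then have gi: "\<gamma> = \<infinity>" and L: "\<not> (1 < Liminf at_top (\<lambda>t. ereal (\<psi> (2*t) / \<psi> t)))"
      using cs by auto
    show ?thesis
    proof (cases "\<exists>C. \<forall>s. 0 \<le> s \<longrightarrow> \<psi> s \<le> C")
      case True
      then obtain C where "\<And>s. 0 \<le> s \<Longrightarrow> \<psi> s \<le> C" by blast
      then show ?thesis by (rule kernelInf[OF gi])
    next
      case False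
      then have "\<And>B. \<exists>s. 0 \<le> s \<and> B < \<psi> s" by (meson not_le)
      then show ?thesis by (rule singularInf[OF gi L])
    qed
  qed
  then show False using assms(8) by simp
qed


end
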